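(* Let $\theta_1,\theta_2>0$, $\theta=\theta_1+\theta_2$, $p=\theta_1/\theta$, and let $\{\xi(t)\}_{t\ge 0}$ be the Fleming–Viot process on $[0,1]$ with $\xi(0)=x$ and generator \[ \mathcal{L}g(x)=x\big(g(1)-g(x)\big)+(1-x)\big(g(0)-g(x)\big)+\tfrac12(\theta_1-\theta x)g'(x),\qquad g\in C^2([0,1]). \] Let \[ p_{11}(t)=e^{-\theta t/2}+(1-e^{-\theta t/2})p,\quad p_{21}(t)=(1-e^{-\theta t/2})p, \] \[ q_1(t;x)=xe^{-\theta t/2}+(1-e^{-\theta t/2})p,\quad q_2(t;x)=1-q_1(t;x). \] Then \[ \xi(t)=\begin{cases} q_1(t;x) & \text{with probability } e^{-t},\\ p_{i1}(\tau),\ i=1,2, & \text{with probability } (1-e^{-t})\,q_i(t-\tau;x),\end{cases} \] where $\tau$ has the truncated exponential density $(1-e^{-t})^{-1}e^{-\tau}$, $0<\tau<t$. The continuous part of the distribution of $\xi(t)$ has density $f(\xi;x,t)$ equal to \[ \Big(p+e^{-\theta t/2}(x-p)\tfrac{1-p}{\xi-p}\Big)\frac{2}{\theta}\Big(\frac{\xi-p}{1-p}\Big)^{2/\theta-1}\frac{1}{1-p}\quad\text{for } \xi>p+(1-p)e^{-\theta t/2}, \] \[ \Big(1-p-e^{-\theta t/2}(x-p)\big(1-\tfrac{\xi}{p}\big)^{-1}\Big)\frac{2}{\theta}\Big(1-\frac{\xi}{p}\Big)^{2/\theta-1}\frac1p\quad\text{for } \xi<p(1-e^{-\theta t/2}),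 \] and zero for $p(1-e^{-\theta t/2})<\xi<p+(1-p)e^{-\theta t/2}$. The stationary density of $\{\xi(t)\}$ is \[ f(\xi)=\lim_{t\to\infty}f(\xi;x,t)=\begin{cases} p\,\frac{2}{\theta}\Big(\frac{\xi-p}{1-p}\Big)^{2/\theta-1}\frac{1}{1-p}, & \xi>p,\\[4pt] (1-p)\,\frac{2}{\theta}\Big(1-\frac{\xi}{p}\Big)^{2/\theta-1}\frac1p, & \xi<p.\end{cases} \]
   Context: This is the star-shaped $\Lambda$-Fleming–Viot process ($\Lambda$ a unit atom at $1$) with two types and mutation: $\xi(t)$ is the frequency of type 1 at time $t$; at rate 1 the whole population is replaced by the offspring of a single individual chosen at random (type 1 with probability equal to the current type-1 frequency); mutation occurs along lines at rate $\theta/2$, the new type being type 1 with probability $p$. Here $p_{i1}(t)$ is the probability that a single line of type $i$ is of type 1 after time $t$, and $q_i(t;x)$ the probability that a single individual at time $t$ is of type $i$ given no replacement in $(0,t)$. *)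

theory Defs
  imports "HOL-Probability.Probability"
begin

definition fv_theta :: "real \<Rightarrow> real \<Rightarrow> real" where
  "fv_theta \<theta>1 \<theta>2 = \<theta>1 + \<theta>2"

definition fv_p :: "real \<Rightarrow> real \<Rightarrow> real" where
  "fv_p \<theta>1 \<theta>2 = \<theta>1 / fv_theta \<theta>1 \<theta>2"

definition fv_gen :: "real \<Rightarrow> real \<Rightarrow> (real \<Rightarrow> real) \<Rightarrow> (real \<Rightarrow> real) \<Rightarrow> real \<Rightarrow> real" where
  "fv_gen \<theta>1 \<theta>2 g dg y =
     y * (g 1 - g y) + (1 - y) * (g 0 - g y) + (\<theta>1 - fv_theta \<theta>1 \<theta>2 * y) / 2 * dg y"

text \<open>Kolmogorov forward equation for a family of one-dimensional marginal laws P t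
  (t \<ge> 0) of a process with generator fv_gen, tested against all C^2 functions.\<close>
definition fv_evolution :: "real \<Rightarrow> real \<Rightarrow> (real \<Rightarrow> real measure) \<Rightarrow> bool" where
  "fv_evolution \<theta>1 \<theta>2 P \<longleftrightarrow>
     (\<forall>t\<ge>0. sets (P t) = sets borel \<and> prob_space (P t) \<and> emeasure (P t) {0..1} = 1) \<and>
     (\<forall>g dg d2g. (\<forall>y. (g has_real_derivative dg y) (at y)) \<and>
                 (\<forall>y. (dg has_real_derivative d2g y) (at y)) \<and> continuous_on UNIV d2g \<longrightarrow>
        (\<forall>t\<ge>0. ((\<lambda>s. \<integral>y. g y \<partial>P s) has_real_derivative
                    (\<integral>y. fv_gen \<theta>1 \<theta>2 g dg y \<partial>P t)) (at t within {0..})))"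

definition fv_law :: "real \<Rightarrow> real \<Rightarrow> real \<Rightarrow> (real \<Rightarrow> real measure) \<Rightarrow> bool" where
  "fv_law \<theta>1 \<theta>2 x P \<longleftrightarrow> P 0 = return borel x \<and> fv_evolution \<theta>1 \<theta>2 P"

definition fv_p11 :: "real \<Rightarrow> real \<Rightarrow> real \<Rightarrow> real" where
  "fv_p11 \<theta>1 \<theta>2 t = exp (- fv_theta \<theta>1 \<theta>2 * t / 2)
      + (1 - exp (- fv_theta \<theta>1 \<theta>2 * t / 2)) * fv_p \<theta>1 \<theta>2"

definition fv_p21 :: "real \<Rightarrow> real \<Rightarrow> real \<Rightarrow> real" where
  "fv_p21 \<theta>1 \<theta>2 t = (1 - exp (- fv_theta \<theta>1 \<theta>2 * t / 2)) * fv_p \<theta>1 \<theta>2"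

definition fv_q1 :: "real \<Rightarrow> real \<Rightarrow> real \<Rightarrow> real \<Rightarrow> real" where
  "fv_q1 \<theta>1 \<theta>2 t x = x * exp (- fv_theta \<theta>1 \<theta>2 * t / 2)
      + (1 - exp (- fv_theta \<theta>1 \<theta>2 * t / 2)) * fv_p \<theta>1 \<theta>2"

definition fv_q2 :: "real \<Rightarrow> real \<Rightarrow> real \<Rightarrow> real \<Rightarrow> real" where
  "fv_q2 \<theta>1 \<theta>2 t x = 1 - fv_q1 \<theta>1 \<theta>2 t x"

text \<open>The factors (1 - e^{-t}) cancel.\<close>
definition fv_mix :: "real \<Rightarrow> real \<Rightarrow> real \<Rightarrow> real \<Rightarrow> real set \<Rightarrow> real" where
  "fv_mix \<theta>1 \<theta>2 x t A =
     exp (- t) * indicator A (fv_q1 \<theta>1 \<theta>2 t x)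
     + (LBINT \<tau>:{0<..<t}. exp (- \<tau>) *
          (fv_q1 \<theta>1 \<theta>2 (t - \<tau>) x * indicator A (fv_p11 \<theta>1 \<theta>2 \<tau>)
           + fv_q2 \<theta>1 \<theta>2 (t - \<tau>) x * indicator A (fv_p21 \<theta>1 \<theta>2 \<tau>)))"

definition fv_dens :: "real \<Rightarrow> real \<Rightarrow> real \<Rightarrow> real \<Rightarrow> real \<Rightarrow> real" where
  "fv_dens \<theta>1 \<theta>2 x t \<xi> =
     (let \<theta> = fv_theta \<theta>1 \<theta>2; p = fv_p \<theta>1 \<theta>2; a = exp (- \<theta> * t / 2) in
      if \<xi> < 0 \<or> \<xi> > 1 then 0
      else if \<xi> > p + (1 - p) * a then
        (p + a * (x - p) * ((1 - p) / (\<xi> - p))) * (2 / \<theta>)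
          * ((\<xi> - p) / (1 - p)) powr (2 / \<theta> - 1) * (1 / (1 - p))
      else if \<xi> < p * (1 - a) then
        (1 - p - a * (x - p) * inverse (1 - \<xi> / p)) * (2 / \<theta>)
          * (1 - \<xi> / p) powr (2 / \<theta> - 1) * (1 / p)
      else 0)"

definition fv_stat :: "real \<Rightarrow> real \<Rightarrow> real \<Rightarrow> real" where
  "fv_stat \<theta>1 \<theta>2 \<xi> =
     (let \<theta> = fv_theta \<theta>1 \<theta>2; p = fv_p \<theta>1 \<theta>2 in
      if \<xi> < 0 \<or> \<xi> > 1 then 0
      else if \<xi> > p then p * (2 / \<theta>) * ((\<xi> - p) / (1 - p)) powr (2 / \<theta> - 1) * (1 / (1 - p))
      else if \<xi> < p then (1 - p) * (2 / \<theta>) * (1 - \<xi> / p) powr (2 / \<theta> - 1) * (1 / p)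
      else 0)"

end

theory Submission
  imports Defs
begin

locale fvl =
  fixes \<theta>1 \<theta>2 :: real
  assumes t1: "\<theta>1 > 0" and t2: "\<theta>2 > 0"
begin

abbreviation "th \<equiv> fv_theta \<theta>1 \<theta>2"
abbreviation "pp \<equiv> fv_p \<theta>1 \<theta>2"
definition aa :: "real \<Rightarrow> real" where "aa t = exp (- th * t / 2)"

lemma th_pos: "th > 0" unfolding fv_theta_def using t1 t2 by simp
lemma p_pos: "0 < pp" unfolding fv_p_def fv_theta_def using t1 t2 by simp
lemma p_lt1: "pp < 1" unfolding fv_p_def fv_theta_def using t1 t2 by simp
lemma th1_eq: "\<theta>1 = th * pp" unfolding fv_p_def using th_pos by simp
lemma aa_pos: "aa t > 0" unfolding aa_def by simp
lemma aa_le1: "t \<ge> 0 \<Longrightarrow> aa t \<le> 1" unfolding aa_def using th_pos by simp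
lemma aa_0[simp]: "aa 0 = 1" unfolding aa_def by simp
lemma aa_diff: "aa (t - s) = aa t / aa s"
  unfolding aa_def by (simp add: exp_diff[symmetric] field_simps)
lemma aa_deriv: "(aa has_real_derivative (- th / 2 * aa t)) (at t within S)"
  unfolding aa_def by (auto intro!: derivative_eq_intros)

lemma p11_eq: "fv_p11 \<theta>1 \<theta>2 t = pp + (1 - pp) * aa t"
  unfolding fv_p11_def aa_def by (simp add: algebra_simps)
lemma p21_eq: "fv_p21 \<theta>1 \<theta>2 t = pp - pp * aa t"
  unfolding fv_p21_def aa_def by (simp add: algebra_simps)
lemma q1_eq: "fv_q1 \<theta>1 \<theta>2 t x = pp + (x - pp) * aa t"
  unfolding fv_q1_def aa_def by (simp add: algebra_simps)
lemma q2_eq: "fv_q2 \<theta>1 \<theta>2 t x = 1 - pp - (x - pp) * aa t"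
  unfolding fv_q2_def q1_eq by simp

lemma conv01: "0 \<le> a \<Longrightarrow> a \<le> 1 \<Longrightarrow> x \<in> {0..1} \<Longrightarrow> pp + (x - pp) * a \<in> {0..(1::real)}"
proof -
  assume a: "0 \<le> a" "a \<le> 1" "x \<in> {0..1}"
  have e: "pp + (x - pp) * a = (1 - a) * pp + a * x" by (simp add: algebra_simps)
  have "0 \<le> (1 - a) * pp + a * x" using a p_pos by simp
  moreover have "(1 - a) * pp + a * x \<le> (1 - a) * 1 + a * 1"
    using a p_lt1 by (intro add_mono mult_left_mono) auto
  ultimately show ?thesis using e by simp
qed

lemma q1_01: "t \<ge> 0 \<Longrightarrow> x \<in> {0..1} \<Longrightarrow> fv_q1 \<theta>1 \<theta>2 t x \<in> {0..1}"
  unfolding q1_eq by (rule conv01) (auto simp: aa_le1 less_imp_le[OF aa_pos])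
lemma q2_01: "t \<ge> 0 \<Longrightarrow> x \<in> {0..1} \<Longrightarrow> fv_q2 \<theta>1 \<theta>2 t x \<in> {0..1}"
  using q1_01[of t x] unfolding fv_q2_def by auto
lemma p11_q1: "fv_p11 \<theta>1 \<theta>2 t = fv_q1 \<theta>1 \<theta>2 t 1"
  unfolding p11_eq q1_eq by simp
lemma p21_q1: "fv_p21 \<theta>1 \<theta>2 t = fv_q1 \<theta>1 \<theta>2 t 0"
  unfolding p21_eq q1_eq by (simp add: algebra_simps)
lemma p11_01: "t \<ge> 0 \<Longrightarrow> fv_p11 \<theta>1 \<theta>2 t \<in> {0..1}"
  unfolding p11_q1 by (rule q1_01) auto
lemma p21_01: "t \<ge> 0 \<Longrightarrow> fv_p21 \<theta>1 \<theta>2 t \<in> {0..1}"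
  unfolding p21_q1 by (rule q1_01) auto

definition hh :: "real \<Rightarrow> real \<Rightarrow> real \<Rightarrow> real" where
  "hh x t u = (if 0 < u \<and> u < t then exp (- u) * fv_q1 \<theta>1 \<theta>2 (t - u) x
     else if - t < u \<and> u < 0 then exp u * fv_q2 \<theta>1 \<theta>2 (t + u) x
     else if t \<le> u \<and> u \<le> t + 1 then exp (- t) else 0)"

definition ph :: "real \<Rightarrow> real \<Rightarrow> real \<Rightarrow> real" where
  "ph x t u = (if 0 < u \<and> u < t then fv_p11 \<theta>1 \<theta>2 u
     else if - t < u \<and> u < 0 then fv_p21 \<theta>1 \<theta>2 (- u) else fv_q1 \<theta>1 \<theta>2 t x)"

definition MM :: "real \<Rightarrow> real \<Rightarrow> real measure" where
  "MM x t = distr (density lborel (\<lambda>u. ennreal (hh x t u))) borel (ph x t)"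

lemma hh_meas[measurable]: "hh x t \<in> borel_measurable borel"
  unfolding hh_def q1_eq q2_eq aa_def by measurable
lemma ph_meas[measurable]: "ph x t \<in> borel_measurable borel"
  unfolding ph_def p11_eq p21_eq q1_eq aa_def by measurable

lemma hh_nonneg: "t \<ge> 0 \<Longrightarrow> x \<in> {0..1} \<Longrightarrow> hh x t u \<ge> 0"
  unfolding hh_def using q1_01[of "t - u" x] q2_01[of "t + u" x] by auto

lemma sets_MM[simp]: "sets (MM x t) = sets borel"
  unfolding MM_def by simp

lemma integrable_ind_bdd:
  fixes g :: "real \<Rightarrow> real"
  assumes S: "S \<in> sets borel" "emeasure lborel S < \<infinity>"
    and g[measurable]: "g \<in> borel_measurable borel" and B: "\<And>u. u \<in> S \<Longrightarrow> \<bar>g u\<bar> \<le> B"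
  shows "integrable lborel (\<lambda>u. indicator S u * g u)"
proof (rule Bochner_Integration.integrable_bound)
  show "integrable lborel (\<lambda>u. B * indicator S u)"
    using S by (intro integrable_mult_right) (simp add: integrable_indicator_iff)
  show "(\<lambda>u. indicator S u * g u) \<in> borel_measurable lborel" using S(1) by measurable
  show "AE u in lborel. norm (indicator S u * g u) \<le> norm (B * indicat_real S u)"
    using B by (auto simp: indicator_def abs_mult intro: order.trans[OF _ abs_ge_self])
qed

end

context fvl begin

lemma bound3: "0 \<le> (a::real) \<Longrightarrow> a \<le> 1 \<Longrightarrow> 0 \<le> b \<Longrightarrow> b \<le> 1 \<Longrightarrow> \<bar>c\<bar> \<le> B \<Longrightarrow> \<bar>a * (b * c)\<bar> \<le> B"
proof -
  assume h: "0 \<le> a" "a \<le> 1" "0 \<le> b" "b \<le> 1" "\<bar>c\<bar> \<le> B"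
  have "\<bar>a * (b * c)\<bar> = a * (b * \<bar>c\<bar>)" using h by (simp add: abs_mult)
  also have "\<dots> \<le> 1 * (1 * B)" using h
    by (intro mult_mono) (auto intro: order.trans[OF abs_ge_zero])
  finally show ?thesis by simp
qed

lemma int_MM:
  assumes t: "t \<ge> 0" and x: "x \<in> {0..1}" and f[measurable]: "f \<in> borel_measurable borel"
    and B: "\<And>v. v \<in> {0..1} \<Longrightarrow> \<bar>f v\<bar> \<le> B"
  shows "integral\<^sup>L (MM x t) f = exp (- t) * f (fv_q1 \<theta>1 \<theta>2 t x)
     + (LBINT \<tau>:{0<..<t}. exp (- \<tau>) * (fv_q1 \<theta>1 \<theta>2 (t - \<tau>) x * f (fv_p11 \<theta>1 \<theta>2 \<tau>)
           + fv_q2 \<theta>1 \<theta>2 (t - \<tau>) x * f (fv_p21 \<theta>1 \<theta>2 \<tau>)))"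
proof -
  define G1 where "G1 u = exp (- u) * (fv_q1 \<theta>1 \<theta>2 (t - u) x * f (fv_p11 \<theta>1 \<theta>2 u))" for u
  define G2 where "G2 u = exp (- u) * (fv_q2 \<theta>1 \<theta>2 (t - u) x * f (fv_p21 \<theta>1 \<theta>2 u))" for u
  define c where "c = exp (- t) * f (fv_q1 \<theta>1 \<theta>2 t x)"
  have mG1[measurable]: "G1 \<in> borel_measurable borel"
    unfolding G1_def q1_eq p11_eq aa_def by measurable
  have mG2[measurable]: "G2 \<in> borel_measurable borel"
    unfolding G2_def q2_eq p21_eq aa_def by measurable
  have bG1: "\<bar>G1 u\<bar> \<le> B" if "u \<in> {0<..<t}" for u
    unfolding G1_def using that q1_01[of "t - u" x] x p11_01[of u] B[of "fv_p11 \<theta>1 \<theta>2 u"]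
    by (intro bound3) auto
  have bG2: "\<bar>G2 u\<bar> \<le> B" if "u \<in> {0<..<t}" for u
    unfolding G2_def using that q2_01[of "t - u" x] x p21_01[of u] B[of "fv_p21 \<theta>1 \<theta>2 u"]
    by (intro bound3) auto
  have bc: "\<bar>c\<bar> \<le> B"
  proof -
    have "\<bar>exp (- t) * (1 * f (fv_q1 \<theta>1 \<theta>2 t x))\<bar> \<le> B"
      by (rule bound3) (use t q1_01[OF t x] B[of "fv_q1 \<theta>1 \<theta>2 t x"] in auto)
    thus ?thesis by (simp add: c_def)
  qed
  have i1: "integrable lborel (\<lambda>u. indicator {0<..<t} u * G1 u)"
    by (rule integrable_ind_bdd[where B=B]) (use t in \<open>auto intro: bG1\<close>)
  have i2': "integrable lborel (\<lambda>u. indicator {0<..<t} u * G2 u)"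
    by (rule integrable_ind_bdd[where B=B]) (use t in \<open>auto intro: bG2\<close>)
  have i2: "integrable lborel (\<lambda>u. indicator {-t<..<0} u * G2 (- u))"
    by (rule integrable_ind_bdd[where B=B]) (use t in \<open>auto intro: bG2\<close>)
  have i3: "integrable lborel (\<lambda>u. indicator {t..t+1} u * c)"
    by (rule integrable_ind_bdd[where B=B]) (use t in \<open>auto intro: bc\<close>)
  have "integral\<^sup>L (MM x t) f = (\<integral>u. hh x t u * f (ph x t u) \<partial>lborel)"
    unfolding MM_def using hh_nonneg[OF t x]
    by (subst integral_distr) (auto simp: integral_density)
  also have "\<dots> = (\<integral>u. indicator {0<..<t} u * G1 u + indicator {-t<..<0} u * G2 (- u)
       + indicator {t..t+1} u * c \<partial>lborel)"
  proof (rule Bochner_Integration.integral_cong[OF refl])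
    fix u :: real
    show "hh x t u * f (ph x t u) = indicator {0<..<t} u * G1 u + indicator {-t<..<0} u * G2 (- u)
       + indicator {t..t+1} u * c"
    proof (cases "0 < u \<and> u < t")
      case True then show ?thesis by (simp add: hh_def ph_def G1_def indicator_def)
    next
      case n1: False
      show ?thesis
      proof (cases "- t < u \<and> u < 0")
        case True then show ?thesis using n1 by (simp add: hh_def ph_def G2_def indicator_def)
      next
        case n2: False
        show ?thesis
        proof (cases "t \<le> u \<and> u \<le> t + 1")
          case True then show ?thesis using n1 n2 by (simp add: hh_def ph_def c_def indicator_def)
        next
          case False then show ?thesis using n1 n2 by (auto simp: hh_def ph_def indicator_def)
        qed
      qed
    qed
  qed
  also have "\<dots> = (\<integral>u. indicator {0<..<t} u * G1 u \<partial>lborel)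
       + (\<integral>u. indicator {-t<..<0} u * G2 (- u) \<partial>lborel) + (\<integral>u. indicator {t..t+1} u * c \<partial>lborel)"
    using i1 i2 i3 by simp
  also have "(\<integral>u. indicator {-t<..<0} u * G2 (- u) \<partial>lborel)
      = (\<integral>u. indicator {0<..<t} u * G2 u \<partial>lborel)"
    by (subst lborel_integral_real_affine[where c="-1" and t=0])
       (auto intro!: Bochner_Integration.integral_cong simp: indicator_def)
  also have "(\<integral>u. indicator {t..t+1} u * c \<partial>lborel) = c"
    using t by simp
  also have "(\<integral>u. indicator {0<..<t} u * G1 u \<partial>lborel) + (\<integral>u. indicator {0<..<t} u * G2 u \<partial>lborel)
     = (LBINT \<tau>:{0<..<t}. exp (- \<tau>) * (fv_q1 \<theta>1 \<theta>2 (t - \<tau>) x * f (fv_p11 \<theta>1 \<theta>2 \<tau>)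
           + fv_q2 \<theta>1 \<theta>2 (t - \<tau>) x * f (fv_p21 \<theta>1 \<theta>2 \<tau>)))"
    unfolding set_lebesgue_integral_def using i1 i2'
    by (subst Bochner_Integration.integral_add[symmetric]) 
       (auto intro!: Bochner_Integration.integral_cong simp: G1_def G2_def algebra_simps)
  finally show ?thesis unfolding c_def by simp
qed

end

context fvl begin

lemma ph_01: "t \<ge> 0 \<Longrightarrow> x \<in> {0..1} \<Longrightarrow> ph x t u \<in> {0..1}"
  unfolding ph_def using p11_01[of u] p21_01[of "-u"] q1_01[of t x] by auto

lemma LBINT_exp: fixes t :: real shows "t \<ge> 0 \<Longrightarrow> (LBINT \<tau>:{0<..<t}. exp (- \<tau>)) = 1 - exp (- t)"
proof -
  assume t: "t \<ge> 0"
  have "(LBINT \<tau>=ereal 0..ereal t. exp (- \<tau>)) = (- exp (- t)) - (- exp (- 0))"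
    by (rule interval_integral_FTC_finite)
       (auto intro!: continuous_intros derivative_eq_intros simp: has_real_derivative_iff_has_vector_derivative[symmetric])
  moreover have "(LBINT \<tau>=ereal 0..ereal t. exp (- \<tau>)) = (LBINT \<tau>:{0<..<t}. exp (- \<tau>))"
    using t by (subst interval_integral_Ioo) auto
  ultimately show ?thesis by simp
qed

lemma hh_le1: "t \<ge> 0 \<Longrightarrow> x \<in> {0..1} \<Longrightarrow> hh x t u \<le> 1"
proof -
  assume t: "t \<ge> 0" and x: "x \<in> {0..1}"
  have e1: "exp (- u) * fv_q1 \<theta>1 \<theta>2 (t - u) x \<le> 1 * 1" if "0 < u" "u < t"
    using that q1_01[of "t - u" x] x by (intro mult_mono) auto
  have e2: "exp u * fv_q2 \<theta>1 \<theta>2 (t + u) x \<le> 1 * 1" if "-t < u" "u < 0"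
    using that q2_01[of "t + u" x] x by (intro mult_mono) auto
  show ?thesis unfolding hh_def using e1 e2 t by auto
qed

lemma integrable_hh: "t \<ge> 0 \<Longrightarrow> x \<in> {0..1} \<Longrightarrow> integrable lborel (hh x t)"
proof -
  assume t: "t \<ge> 0" and x: "x \<in> {0..1}"
  have "integrable lborel (\<lambda>u. indicator {-t..t+1} u * hh x t u)"
    by (rule integrable_ind_bdd[where B=1]) (use t x hh_le1 hh_nonneg in auto)
  moreover have "(\<lambda>u. indicator {-t..t+1} u * hh x t u) = hh x t"
    by (rule ext) (use t in \<open>auto simp: indicator_def hh_def\<close>)
  ultimately show ?thesis by simp
qed

lemma emeasure_MM_UNIV: "t \<ge> 0 \<Longrightarrow> x \<in> {0..1} \<Longrightarrow> emeasure (MM x t) UNIV = 1"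
proof -
  assume t: "t \<ge> 0" and x: "x \<in> {0..1}"
  have "emeasure (MM x t) UNIV = emeasure (density lborel (\<lambda>u. ennreal (hh x t u))) UNIV"
    unfolding MM_def by (subst emeasure_distr) auto
  also have "\<dots> = (\<integral>\<^sup>+u. ennreal (hh x t u) \<partial>lborel)"
    by (subst emeasure_density) auto
  also have "\<dots> = ennreal (\<integral>u. hh x t u \<partial>lborel)"
    using integrable_hh[OF t x] hh_nonneg[OF t x] by (intro nn_integral_eq_integral) auto
  also have "(\<integral>u. hh x t u \<partial>lborel) = integral\<^sup>L (MM x t) (\<lambda>_. 1)"
    unfolding MM_def
    apply (subst integral_distr)
    apply measurable
    apply (subst integral_density)
    using hh_nonneg[OF t x] by auto
  also have "\<dots> = exp (- t) * 1 + (LBINT \<tau>:{0<..<t}. exp (- \<tau>) * (fv_q1 \<theta>1 \<theta>2 (t - \<tau>) x * 1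
           + fv_q2 \<theta>1 \<theta>2 (t - \<tau>) x * 1))"
    by (rule int_MM[OF t x, where B=1]) auto
  also have "\<dots> = 1" using LBINT_exp[OF t] by (simp add: fv_q2_def)
  finally show ?thesis by simp
qed

lemma space_MM[simp]: "space (MM x t) = UNIV" by (simp add: MM_def)

lemma prob_MM: "t \<ge> 0 \<Longrightarrow> x \<in> {0..1} \<Longrightarrow> prob_space (MM x t)"
  by (rule prob_spaceI) (simp add: emeasure_MM_UNIV)

lemma real_distr_MM: "t \<ge> 0 \<Longrightarrow> x \<in> {0..1} \<Longrightarrow> real_distribution (MM x t)"
  using prob_MM by (simp add: real_distribution_def real_distribution_axioms_def)

lemma emeasure_MM_01: "t \<ge> 0 \<Longrightarrow> x \<in> {0..1} \<Longrightarrow> emeasure (MM x t) {0..1} = 1"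
proof -
  assume t: "t \<ge> 0" and x: "x \<in> {0..1}"
  have "emeasure (MM x t) {0..1} = emeasure (density lborel (\<lambda>u. ennreal (hh x t u))) (ph x t -` {0..1})"
    unfolding MM_def by (subst emeasure_distr) auto
  also have "ph x t -` {0..1} = UNIV" using ph_01[OF t x] by auto
  also have "emeasure (density lborel (\<lambda>u. ennreal (hh x t u))) UNIV = emeasure (MM x t) UNIV"
    unfolding MM_def by (subst emeasure_distr) auto
  finally show ?thesis using emeasure_MM_UNIV[OF t x] by simp
qed

lemma AE_MM_01: "t \<ge> 0 \<Longrightarrow> x \<in> {0..1} \<Longrightarrow> AE y in MM x t. y \<in> {0..1}"
proof -
  assume t: "t \<ge> 0" and x: "x \<in> {0..1}"
  interpret prob_space "MM x t" using prob_MM[OF t x] .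
  show ?thesis using emeasure_MM_01[OF t x]
    by (subst AE_prob_1) (auto simp: emeasure_eq_measure)
qed

lemma emeasure_MM: "t \<ge> 0 \<Longrightarrow> x \<in> {0..1} \<Longrightarrow> A \<in> sets borel \<Longrightarrow>
    emeasure (MM x t) A = ennreal (fv_mix \<theta>1 \<theta>2 x t A)"
proof -
  assume t: "t \<ge> 0" and x: "x \<in> {0..1}" and A: "A \<in> sets borel"
  interpret prob_space "MM x t" using prob_MM[OF t x] .
  have "emeasure (MM x t) A = ennreal (measure (MM x t) A)" by (simp add: emeasure_eq_measure)
  also have "measure (MM x t) A = integral\<^sup>L (MM x t) (indicator A)"
    using A by simp
  also have "\<dots> = fv_mix \<theta>1 \<theta>2 x t A"
    unfolding fv_mix_def using A by (subst int_MM[OF t x, where B=1]) auto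
  finally show ?thesis .
qed

lemma MM_0: "x \<in> {0..1} \<Longrightarrow> MM x 0 = return borel x"
proof (rule measure_eqI)
  assume x: "x \<in> {0..1}"
  show "sets (MM x 0) = sets (return borel x)" by simp
  fix A assume "A \<in> sets (MM x 0)"
  then have A: "A \<in> sets borel" by simp
  show "emeasure (MM x 0) A = emeasure (return borel x) A"
    using A by (simp add: emeasure_MM[OF order.refl x A] fv_mix_def q1_eq set_lebesgue_integral_def split: split_indicator)
qed

end

lemma deriv_Icc_Ici:
  fixes t :: real
  assumes "(f has_real_derivative D) (at t within {0..t+1})" "0 \<le> t"
  shows "(f has_real_derivative D) (at t within {0..})"
proof -
  have "at t within {0..t+1} = at t within {0..}"
    by (rule at_within_nhd[where S="{t-1<..<t+1}"]) (use assms(2) in auto)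
  thus ?thesis using assms(1) by simp
qed

lemma cont_bdd01:
  fixes h :: "real \<Rightarrow> real"
  assumes "continuous_on UNIV h"
  obtains B where "\<And>v. v \<in> {0..1} \<Longrightarrow> \<bar>h v\<bar> \<le> B"
proof -
  have "bounded (h ` {0..1})"
    by (intro compact_imp_bounded compact_continuous_image continuous_on_subset[OF assms]) auto
  then obtain B where "\<forall>y\<in>h ` {0..1}. norm y \<le> B" by (auto simp: bounded_iff)
  then have "\<And>v. v \<in> {0..1} \<Longrightarrow> \<bar>h v\<bar> \<le> B" by auto
  thus ?thesis by (rule that)
qed

context fvl begin

definition SS :: "(real \<Rightarrow> real) \<Rightarrow> real \<Rightarrow> real" where
  "SS h s = (LBINT \<tau>=ereal 0..ereal s. exp (- \<tau>) * (pp * h (fv_p11 \<theta>1 \<theta>2 \<tau>) + (1 - pp) * h (fv_p21 \<theta>1 \<theta>2 \<tau>)))"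
definition TT :: "(real \<Rightarrow> real) \<Rightarrow> real \<Rightarrow> real" where
  "TT h s = (LBINT \<tau>=ereal 0..ereal s. exp (- \<tau>) / aa \<tau> * (h (fv_p11 \<theta>1 \<theta>2 \<tau>) - h (fv_p21 \<theta>1 \<theta>2 \<tau>)))"

lemma cont_p11: "continuous_on S (fv_p11 \<theta>1 \<theta>2)"
  unfolding fv_p11_def by (intro continuous_intros) auto
lemma cont_p21: "continuous_on S (fv_p21 \<theta>1 \<theta>2)"
  unfolding fv_p21_def by (intro continuous_intros) auto
lemma cont_aa: "continuous_on S aa"
  unfolding aa_def by (intro continuous_intros) auto

lemma int_MM_cont:
  assumes t: "t \<ge> 0" and x: "x \<in> {0..1}" and h: "continuous_on UNIV h"
  shows "integral\<^sup>L (MM x t) h = exp (- t) * h (fv_q1 \<theta>1 \<theta>2 t x) + SS h t + (x - pp) * aa t * TT h t"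
proof -
  obtain B where B: "\<And>v. v \<in> {0..1} \<Longrightarrow> \<bar>h v\<bar> \<le> B" using cont_bdd01[OF h] by blast
  have hm[measurable]: "h \<in> borel_measurable borel" using h by (simp add: borel_measurable_continuous_onI)
  have hc: "continuous_on S (\<lambda>\<tau>. h (f \<tau>))" if "continuous_on S f" for f and S :: "real set"
    by (rule continuous_on_compose2[OF h that]) auto
  have c1: "continuous_on {0..t} (\<lambda>\<tau>. exp (- \<tau>) * (pp * h (fv_p11 \<theta>1 \<theta>2 \<tau>) + (1 - pp) * h (fv_p21 \<theta>1 \<theta>2 \<tau>)))"
    by (intro continuous_intros hc cont_p11 cont_p21)
  have c2: "continuous_on {0..t} (\<lambda>\<tau>. exp (- \<tau>) / aa \<tau> * (h (fv_p11 \<theta>1 \<theta>2 \<tau>) - h (fv_p21 \<theta>1 \<theta>2 \<tau>)))"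
    by (intro continuous_intros hc cont_p11 cont_p21 cont_aa) (auto simp: aa_pos[THEN less_imp_neq, symmetric])
  have "integral\<^sup>L (MM x t) h = exp (- t) * h (fv_q1 \<theta>1 \<theta>2 t x)
     + (LBINT \<tau>:{0<..<t}. exp (- \<tau>) * (fv_q1 \<theta>1 \<theta>2 (t - \<tau>) x * h (fv_p11 \<theta>1 \<theta>2 \<tau>)
           + fv_q2 \<theta>1 \<theta>2 (t - \<tau>) x * h (fv_p21 \<theta>1 \<theta>2 \<tau>)))"
    by (rule int_MM[OF t x hm B])
  also have "(LBINT \<tau>:{0<..<t}. exp (- \<tau>) * (fv_q1 \<theta>1 \<theta>2 (t - \<tau>) x * h (fv_p11 \<theta>1 \<theta>2 \<tau>)
           + fv_q2 \<theta>1 \<theta>2 (t - \<tau>) x * h (fv_p21 \<theta>1 \<theta>2 \<tau>)))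
      = (LBINT \<tau>=ereal 0..ereal t. exp (- \<tau>) * (fv_q1 \<theta>1 \<theta>2 (t - \<tau>) x * h (fv_p11 \<theta>1 \<theta>2 \<tau>)
           + fv_q2 \<theta>1 \<theta>2 (t - \<tau>) x * h (fv_p21 \<theta>1 \<theta>2 \<tau>)))"
    using t by (subst interval_integral_Ioo) auto
  also have "\<dots> = (LBINT \<tau>=ereal 0..ereal t. exp (- \<tau>) * (pp * h (fv_p11 \<theta>1 \<theta>2 \<tau>) + (1 - pp) * h (fv_p21 \<theta>1 \<theta>2 \<tau>))
       + (x - pp) * aa t * (exp (- \<tau>) / aa \<tau> * (h (fv_p11 \<theta>1 \<theta>2 \<tau>) - h (fv_p21 \<theta>1 \<theta>2 \<tau>))))"
    by (rule interval_integral_cong) 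
       (auto simp: q1_eq q2_eq aa_diff field_simps aa_pos[THEN less_imp_neq, symmetric])
  also have "\<dots> = SS h t + (x - pp) * aa t * TT h t"
  proof -
    let ?a = "\<lambda>\<tau>. exp (- \<tau>) * (pp * h (fv_p11 \<theta>1 \<theta>2 \<tau>) + (1 - pp) * h (fv_p21 \<theta>1 \<theta>2 \<tau>))"
    let ?b = "\<lambda>\<tau>. exp (- \<tau>) / aa \<tau> * (h (fv_p11 \<theta>1 \<theta>2 \<tau>) - h (fv_p21 \<theta>1 \<theta>2 \<tau>))"
    let ?K = "(x - pp) * aa t"
    have i1: "interval_lebesgue_integrable lborel (ereal 0) (ereal t) ?a"
      by (rule interval_integrable_continuous_on[OF t c1])
    have i2: "interval_lebesgue_integrable lborel (ereal 0) (ereal t) (\<lambda>\<tau>. ?K * ?b \<tau>)"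
      by (rule interval_lebesgue_integrable_mult_right, rule interval_integrable_continuous_on[OF t c2])
    have "(LBINT \<tau>=ereal 0..ereal t. ?a \<tau> + ?K * ?b \<tau>) = (LBINT \<tau>=ereal 0..ereal t. ?a \<tau>) + (LBINT \<tau>=ereal 0..ereal t. ?K * ?b \<tau>)"
      by (rule interval_lebesgue_integral_add(2)[OF i1 i2])
    also have "(LBINT \<tau>=ereal 0..ereal t. ?K * ?b \<tau>) = ?K * (LBINT \<tau>=ereal 0..ereal t. ?b \<tau>)"
      by (rule interval_lebesgue_integral_mult_right)
    finally show ?thesis unfolding SS_def TT_def .
  qed
  finally show ?thesis by simp
qed

end

lemma alg: fixes e a p th x A G1 G0 gy gz dy dz :: real
  shows "(0*(e*a) + -(e*a)*p)*gy + dy*((1-p)*(-th/2*a))*(p*(e*a)) + ((0*(e*a) + -(e*a)*(1-p))*gz + dz*(-(p*(-th/2*a)))*((1-p)*(e*a))) + (0*(e*(gy-gz)) + ((th/2-1)*e*(gy-gz) + (dy*((1-p)*(-th/2*a)) - dz*(-(p*(-th/2*a))))*e)*((x-p)*A)) - (-(e*a)*(p*G1+(1-p)*G0) + 0*(e*a)) - ((0*(e*a) + -(e*a)*((x-p)*A))*(G1-G0) + 0*((x-p)*A*(e*a)))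
  = e*a*(p*((p + (1-p)*a)*(G1-gy) + (1-(p + (1-p)*a))*(G0-gy) + th*(p-(p + (1-p)*a))/2*dy) + (1-p)*((p - p*a)*(G1-gz)+(1-(p - p*a))*(G0-gz) + th*(p-(p - p*a))/2*dz)) + (x-p)*A*(e*((p + (1-p)*a)*(G1-gy) + (1-(p + (1-p)*a))*(G0-gy) + th*(p-(p + (1-p)*a))/2*dy - ((p - p*a)*(G1-gz)+(1-(p - p*a))*(G0-gz) + th*(p-(p - p*a))/2*dz))) - -th/2*(x-p)*A*(e*(gy-gz))"
  by (simp add: field_simps) 

lemma alg2: fixes E a gQ dQ gY gZ G1 G0 T p th x :: real
  assumes "a \<noteq> 0"
  shows "- E * gQ + dQ * ((x - p) * (- th / 2 * a)) * E + E * (p * gY + (1 - p) * gZ) + ((0 * a + - th / 2 * a * (x - p)) * T + E / a * (gY - gZ) * ((x - p) * a)) = E * ((p + (x - p) * a) * (G1 - gQ) + (1 - (p + (x - p) * a)) * (G0 - gQ) + th * (p - (p + (x - p) * a)) / 2 * dQ) + (p * E * gY + (1 - p) * E * gZ + (x - p) * a * (E / a * (gY - gZ)) - E * (p * G1 + (1 - p) * G0) - (x - p) * a * E * (G1 - G0) - 0) + - th / 2 * (x - p) * a * T"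
  using assms by (simp add: field_simps)

lemma lin2:
  fixes t K :: real
  assumes t: "0 \<le> t" and ca: "continuous_on {0..t} a" and cb: "continuous_on {0..t} b"
  shows "(LBINT \<tau>=ereal 0..ereal t. a \<tau> + K * b \<tau>) = (LBINT \<tau>=ereal 0..ereal t. a \<tau>) + K * (LBINT \<tau>=ereal 0..ereal t. b \<tau>)"
proof -
  have i1: "interval_lebesgue_integrable lborel (ereal 0) (ereal t) a"
    by (rule interval_integrable_continuous_on[OF t ca])
  have i2: "interval_lebesgue_integrable lborel (ereal 0) (ereal t) (\<lambda>\<tau>. K * b \<tau>)"
    by (rule interval_lebesgue_integrable_mult_right, rule interval_integrable_continuous_on[OF t cb])
  have "(LBINT \<tau>=ereal 0..ereal t. a \<tau> + K * b \<tau>) = (LBINT \<tau>=ereal 0..ereal t. a \<tau>) + (LBINT \<tau>=ereal 0..ereal t. K * b \<tau>)"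
    by (rule interval_lebesgue_integral_add(2)[OF i1 i2])
  also have "(LBINT \<tau>=ereal 0..ereal t. K * b \<tau>) = K * (LBINT \<tau>=ereal 0..ereal t. b \<tau>)"
    by (rule interval_lebesgue_integral_mult_right)
  finally show ?thesis .
qed

lemma FTC_0t:
  fixes t :: real
  assumes t: "0 \<le> t" and c: "continuous_on {0..t} f"
    and d: "\<And>\<tau>. (G has_real_derivative f \<tau>) (at \<tau>)"
  shows "(LBINT \<tau>=ereal 0..ereal t. f \<tau>) = G t - G 0"
  by (rule interval_integral_FTC_finite)
     (use t c d in \<open>auto simp: has_real_derivative_iff_has_vector_derivative[symmetric]
        intro: has_field_derivative_at_within\<close>)

context fvl begin

lemma gen_eq: "fv_gen \<theta>1 \<theta>2 g dg y = y * (g 1 - g y) + (1 - y) * (g 0 - g y) + th * (pp - y) / 2 * dg y"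
proof -
  have "\<theta>1 - th * y = th * (pp - y)" using th_pos by (simp add: fv_p_def right_diff_distrib)
  thus ?thesis unfolding fv_gen_def by simp
qed

lemma aa_chain_eq: "(f has_real_derivative D) (at s within S) \<Longrightarrow> E = - th / 2 * aa (f s) * D \<Longrightarrow>
   ((\<lambda>s. aa (f s)) has_real_derivative E) (at s within S)"
  using DERIV_chain2[of aa "- th / 2 * aa (f s)" f s D S] aa_deriv[of "f s" UNIV] by simp

lemma FE_MM:
  assumes x: "x \<in> {0..1}" and g: "\<And>y. (g has_real_derivative dg y) (at y)"
    and dgd: "\<And>y. (dg has_real_derivative d2g y) (at y)" and t: "t \<ge> 0"
  shows "((\<lambda>s. integral\<^sup>L (MM x s) g) has_real_derivative integral\<^sup>L (MM x t) (fv_gen \<theta>1 \<theta>2 g dg))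
           (at t within {0..})"
proof -
  have g_chain_eq: "((\<lambda>s. g (f s)) has_real_derivative E) (at s within S)"
    if "(f has_real_derivative D) (at s within S)" "E = dg (f s) * D" for f D s S E
    using DERIV_chain2[OF g that(1)] that(2) by simp
  have cg: "continuous_on UNIV g"
    using g by (intro continuous_at_imp_continuous_on) (auto intro: DERIV_isCont)
  have cdg: "continuous_on UNIV dg"
    using dgd by (intro continuous_at_imp_continuous_on) (auto intro: DERIV_isCont)
  have cg': "continuous_on S (\<lambda>\<tau>. g (f \<tau>))" if "continuous_on S f" for f and S :: "real set"
    by (rule continuous_on_compose2[OF cg that]) auto
  have cdg': "continuous_on S (\<lambda>\<tau>. dg (f \<tau>))" if "continuous_on S f" for f and S :: "real set"
    by (rule continuous_on_compose2[OF cdg that]) auto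
  have cLg: "continuous_on UNIV (fv_gen \<theta>1 \<theta>2 g dg)"
    unfolding fv_gen_def by (intro continuous_intros cg' cdg') auto
  have cLg': "continuous_on S (\<lambda>\<tau>. fv_gen \<theta>1 \<theta>2 g dg (f \<tau>))" if "continuous_on S f" for f and S :: "real set"
    by (rule continuous_on_compose2[OF cLg that]) auto
  let ?L = "fv_gen \<theta>1 \<theta>2 g dg"
  have naa: "aa \<tau> \<noteq> 0" for \<tau> using aa_pos[of \<tau>] by simp
  define A where "A = aa t"
  define c where "c = - th / 2 * (x - pp) * A"
  define k where "k \<tau> = exp (- \<tau>) / aa \<tau> * (g (fv_p11 \<theta>1 \<theta>2 \<tau>) - g (fv_p21 \<theta>1 \<theta>2 \<tau>))" for \<tau>
  define F where "F \<tau> = exp (- \<tau>) * (pp * ?L (fv_p11 \<theta>1 \<theta>2 \<tau>) + (1 - pp) * ?L (fv_p21 \<theta>1 \<theta>2 \<tau>))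
      + (x - pp) * A * (exp (- \<tau>) / aa \<tau> * (?L (fv_p11 \<theta>1 \<theta>2 \<tau>) - ?L (fv_p21 \<theta>1 \<theta>2 \<tau>)))" for \<tau>
  define G where "G \<tau> = pp * exp (- \<tau>) * g (fv_p11 \<theta>1 \<theta>2 \<tau>) + (1 - pp) * exp (- \<tau>) * g (fv_p21 \<theta>1 \<theta>2 \<tau>)
      + (x - pp) * A * (exp (- \<tau>) / aa \<tau> * (g (fv_p11 \<theta>1 \<theta>2 \<tau>) - g (fv_p21 \<theta>1 \<theta>2 \<tau>)))
      - exp (- \<tau>) * (pp * g 1 + (1 - pp) * g 0) - (x - pp) * A * exp (- \<tau>) * (g 1 - g 0)" for \<tau>
  define ea where "ea \<tau> = exp ((th / 2 - 1) * \<tau>)" for \<tau>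
  have ea_eq: "exp (- \<tau>) / aa \<tau> = ea \<tau>" for \<tau>
    unfolding ea_def aa_def by (simp add: exp_diff[symmetric] field_simps)
  have E_eq: "exp (- \<tau>) = ea \<tau> * aa \<tau>" for \<tau>
    using ea_eq[of \<tau>] naa[of \<tau>] by (simp add: field_simps)
  have hea: "(ea has_real_derivative (th / 2 - 1) * ea \<tau>) (at \<tau>)" for \<tau>
    unfolding ea_def by (auto intro!: derivative_eq_intros)
  have hE: "((\<lambda>\<tau>. exp (- \<tau>)) has_real_derivative - exp (- \<tau>)) (at \<tau>)" for \<tau>
    by (auto intro!: derivative_eq_intros)
  have hY: "((\<lambda>\<tau>. pp + (1 - pp) * aa \<tau>) has_real_derivative (1 - pp) * (- th / 2 * aa \<tau>)) (at \<tau>)" for \<tau>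
    by (auto intro!: derivative_eq_intros aa_deriv)
  have hZ: "((\<lambda>\<tau>. pp - pp * aa \<tau>) has_real_derivative - (pp * (- th / 2 * aa \<tau>))) (at \<tau>)" for \<tau>
    by (auto intro!: derivative_eq_intros aa_deriv)
  have hgY: "((\<lambda>\<tau>. g (pp + (1 - pp) * aa \<tau>)) has_real_derivative dg (pp + (1 - pp) * aa \<tau>) * ((1 - pp) * (- th / 2 * aa \<tau>))) (at \<tau>)" for \<tau>
    by (rule g_chain_eq[OF hY refl])
  have hgZ: "((\<lambda>\<tau>. g (pp - pp * aa \<tau>)) has_real_derivative dg (pp - pp * aa \<tau>) * (- (pp * (- th / 2 * aa \<tau>)))) (at \<tau>)" for \<tau>
    by (rule g_chain_eq[OF hZ refl])
  have G_eq: "G \<tau> = pp * exp (- \<tau>) * g (pp + (1 - pp) * aa \<tau>) + (1 - pp) * exp (- \<tau>) * g (pp - pp * aa \<tau>)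
      + (x - pp) * A * (ea \<tau> * (g (pp + (1 - pp) * aa \<tau>) - g (pp - pp * aa \<tau>)))
      - exp (- \<tau>) * (pp * g 1 + (1 - pp) * g 0) - (x - pp) * A * exp (- \<tau>) * (g 1 - g 0)" for \<tau>
    unfolding G_def p11_eq p21_eq ea_eq ..
  have dG: "(G has_real_derivative (F \<tau> - c * k \<tau>)) (at \<tau>)" for \<tau>
    unfolding G_eq[abs_def]
    apply (rule hgY hgZ hE hea refl | rule derivative_eq_intros)?
    apply (rule hgY hgZ hE hea refl | rule derivative_eq_intros)?
    apply (rule hgY hgZ hE hea refl | rule derivative_eq_intros)?
    apply (rule hgY hgZ hE hea refl | rule derivative_eq_intros)?
    apply (rule hgY hgZ hE hea refl | rule derivative_eq_intros)?
    apply (rule hgY hgZ hE hea refl | rule derivative_eq_intros)?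
    apply (rule hgY hgZ hE hea refl | rule derivative_eq_intros)?
    apply (rule hgY hgZ hE hea refl | rule derivative_eq_intros)?
    apply (rule hgY hgZ hE hea refl | rule derivative_eq_intros)?
    apply (rule hgY hgZ hE hea refl | rule derivative_eq_intros)?
    apply (rule hgY hgZ hE hea refl | rule derivative_eq_intros)?
    apply (rule hgY hgZ hE hea refl | rule derivative_eq_intros)?
    apply (rule hgY hgZ hE hea refl | rule derivative_eq_intros)?
    apply (rule hgY hgZ hE hea refl | rule derivative_eq_intros)?
    apply (rule hgY hgZ hE hea refl | rule derivative_eq_intros)?
    apply (rule hgY hgZ hE hea refl | rule derivative_eq_intros)?
    apply (rule hgY hgZ hE hea refl | rule derivative_eq_intros)?
    apply (rule hgY hgZ hE hea refl | rule derivative_eq_intros)?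
    apply (rule hgY hgZ hE hea refl | rule derivative_eq_intros)?
    apply (rule hgY hgZ hE hea refl | rule derivative_eq_intros)?
    apply (rule hgY hgZ hE hea refl | rule derivative_eq_intros)?
    apply (rule hgY hgZ hE hea refl | rule derivative_eq_intros)?
    apply (rule hgY hgZ hE hea refl | rule derivative_eq_intros)?
    apply (rule hgY hgZ hE hea refl | rule derivative_eq_intros)?
    apply (rule hgY hgZ hE hea refl | rule derivative_eq_intros)?
    apply (rule hgY hgZ hE hea refl | rule derivative_eq_intros)?
    apply (rule hgY hgZ hE hea refl | rule derivative_eq_intros)?
    apply (rule hgY hgZ hE hea refl | rule derivative_eq_intros)?
    apply (rule hgY hgZ hE hea refl | rule derivative_eq_intros)?
    apply (rule hgY hgZ hE hea refl | rule derivative_eq_intros)?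
    apply (rule hgY hgZ hE hea refl | rule derivative_eq_intros)?
    apply (rule hgY hgZ hE hea refl | rule derivative_eq_intros)?
    apply (rule hgY hgZ hE hea refl | rule derivative_eq_intros)?
    apply (rule hgY hgZ hE hea refl | rule derivative_eq_intros)?
    apply (rule hgY hgZ hE hea refl | rule derivative_eq_intros)?
    apply (rule hgY hgZ hE hea refl | rule derivative_eq_intros)?
    apply (rule hgY hgZ hE hea refl | rule derivative_eq_intros)?
    apply (rule hgY hgZ hE hea refl | rule derivative_eq_intros)?
    apply (rule hgY hgZ hE hea refl | rule derivative_eq_intros)?
    apply (rule hgY hgZ hE hea refl | rule derivative_eq_intros)?
    apply (rule hgY hgZ hE hea refl | rule derivative_eq_intros)?
    apply (rule hgY hgZ hE hea refl | rule derivative_eq_intros)?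
    apply (rule hgY hgZ hE hea refl | rule derivative_eq_intros)?
    apply (rule hgY hgZ hE hea refl | rule derivative_eq_intros)?
    apply (rule hgY hgZ hE hea refl | rule derivative_eq_intros)?
    apply (rule hgY hgZ hE hea refl | rule derivative_eq_intros)?
    apply (rule hgY hgZ hE hea refl | rule derivative_eq_intros)?
    apply (rule hgY hgZ hE hea refl | rule derivative_eq_intros)?
    apply (rule hgY hgZ hE hea refl | rule derivative_eq_intros)?
    apply (rule hgY hgZ hE hea refl | rule derivative_eq_intros)?
    apply (rule hgY hgZ hE hea refl | rule derivative_eq_intros)?
    apply (rule hgY hgZ hE hea refl | rule derivative_eq_intros)?
    apply (rule hgY hgZ hE hea refl | rule derivative_eq_intros)?
    apply (rule hgY hgZ hE hea refl | rule derivative_eq_intros)?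
    apply (rule hgY hgZ hE hea refl | rule derivative_eq_intros)?
    apply (rule hgY hgZ hE hea refl | rule derivative_eq_intros)?
    apply (rule hgY hgZ hE hea refl | rule derivative_eq_intros)?
    apply (rule hgY hgZ hE hea refl | rule derivative_eq_intros)?
    apply (rule hgY hgZ hE hea refl | rule derivative_eq_intros)?
    apply (rule hgY hgZ hE hea refl | rule derivative_eq_intros)?
    apply (rule hgY hgZ hE hea refl | rule derivative_eq_intros)?
    apply (rule hgY hgZ hE hea refl | rule derivative_eq_intros)?
    apply (rule hgY hgZ hE hea refl | rule derivative_eq_intros)?
    apply (rule hgY hgZ hE hea refl | rule derivative_eq_intros)?
    apply (rule hgY hgZ hE hea refl | rule derivative_eq_intros)?
    apply (rule hgY hgZ hE hea refl | rule derivative_eq_intros)?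
    apply (rule hgY hgZ hE hea refl | rule derivative_eq_intros)?
    apply (rule hgY hgZ hE hea refl | rule derivative_eq_intros)?
    apply (rule hgY hgZ hE hea refl | rule derivative_eq_intros)?
    apply (rule hgY hgZ hE hea refl | rule derivative_eq_intros)?
    unfolding F_def k_def c_def gen_eq p11_eq p21_eq ea_eq E_eq
    apply (simp only: nonzero_mult_div_cancel_right[OF naa])
    apply (rule alg)
    done
  have cF0: "continuous_on S (\<lambda>\<tau>. exp (- \<tau>) / aa \<tau>)" for S
    by (intro continuous_intros cont_aa) (simp add: naa)
  have cF: "continuous_on {0..t} (\<lambda>\<tau>. F \<tau> - c * k \<tau>)"
    unfolding F_def k_def by (intro continuous_intros cLg' cg' cont_p11 cont_p21 cF0)
  let ?a = "\<lambda>\<tau>. exp (- \<tau>) * (pp * ?L (fv_p11 \<theta>1 \<theta>2 \<tau>) + (1 - pp) * ?L (fv_p21 \<theta>1 \<theta>2 \<tau>))"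
  let ?b = "\<lambda>\<tau>. exp (- \<tau>) / aa \<tau> * (?L (fv_p11 \<theta>1 \<theta>2 \<tau>) - ?L (fv_p21 \<theta>1 \<theta>2 \<tau>))"
  have "SS ?L t + (x - pp) * A * TT ?L t = (LBINT \<tau>=ereal 0..ereal t. ?a \<tau> + (x - pp) * A * ?b \<tau>)"
    unfolding SS_def TT_def
    by (rule lin2[symmetric, OF t]) (intro continuous_intros cLg' cont_p11 cont_p21 cF0)+
  also have "\<dots> = (LBINT \<tau>=ereal 0..ereal t. (F \<tau> - c * k \<tau>) + c * k \<tau>)"
    unfolding F_def by simp
  also have "\<dots> = (LBINT \<tau>=ereal 0..ereal t. F \<tau> - c * k \<tau>) + c * TT g t"
    unfolding TT_def k_def
    by (rule lin2[OF t]) (intro continuous_intros cF[unfolded k_def] cg' cont_p11 cont_p21 cF0)+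
  also have "(LBINT \<tau>=ereal 0..ereal t. F \<tau> - c * k \<tau>) = G t - G 0"
    by (rule FTC_0t[OF t cF dG])
  finally have JL: "integral\<^sup>L (MM x t) ?L = exp (- t) * ?L (fv_q1 \<theta>1 \<theta>2 t x) + (G t - G 0) + c * TT g t"
    unfolding int_MM_cont[OF t x cLg] A_def by simp
  have G0: "G 0 = 0" unfolding G_def p11_eq p21_eq by simp
  let ?fS = "\<lambda>\<tau>. exp (- \<tau>) * (pp * g (fv_p11 \<theta>1 \<theta>2 \<tau>) + (1 - pp) * g (fv_p21 \<theta>1 \<theta>2 \<tau>))"
  let ?fT = "\<lambda>\<tau>. exp (- \<tau>) / aa \<tau> * (g (fv_p11 \<theta>1 \<theta>2 \<tau>) - g (fv_p21 \<theta>1 \<theta>2 \<tau>))"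
  have dSS: "(SS g has_real_derivative ?fS t) (at t within {0..t+1})"
    unfolding SS_def has_real_derivative_iff_has_vector_derivative
    by (rule interval_integral_FTC2) (use t in \<open>auto intro!: continuous_intros cg' cont_p11 cont_p21\<close>)
  have dTT: "(TT g has_real_derivative ?fT t) (at t within {0..t+1})"
    unfolding TT_def has_real_derivative_iff_has_vector_derivative
    by (rule interval_integral_FTC2) (use t in \<open>auto intro!: continuous_intros cg' cont_p11 cont_p21 cF0 cont_aa simp: naa\<close>)
  have hQ: "((\<lambda>s. pp + (x - pp) * aa s) has_real_derivative (x - pp) * (- th / 2 * aa t)) (at t within {0..t+1})"
    by (auto intro!: derivative_eq_intros aa_deriv)
  have dgQ: "((\<lambda>s. g (pp + (x - pp) * aa s)) has_real_derivative dg (pp + (x - pp) * aa t) * ((x - pp) * (- th / 2 * aa t))) (at t within {0..t+1})"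
    by (rule g_chain_eq[OF hQ refl])
  have hE': "((\<lambda>\<tau>. exp (- \<tau>)) has_real_derivative - exp (- t)) (at t within {0..t+1})"
    by (auto intro!: derivative_eq_intros)
  have haa: "(aa has_real_derivative (- th / 2 * aa t)) (at t within {0..t+1})" by (rule aa_deriv)
  define Jg where "Jg s = exp (- s) * g (pp + (x - pp) * aa s) + SS g s + (x - pp) * aa s * TT g s" for s
  have dJ: "(Jg has_real_derivative integral\<^sup>L (MM x t) ?L) (at t within {0..t+1})"
    unfolding Jg_def[abs_def] JL G0
    apply (rule dSS dTT dgQ hE' haa refl | rule derivative_eq_intros)?
    apply (rule dSS dTT dgQ hE' haa refl | rule derivative_eq_intros)?
    apply (rule dSS dTT dgQ hE' haa refl | rule derivative_eq_intros)?
    apply (rule dSS dTT dgQ hE' haa refl | rule derivative_eq_intros)?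
    apply (rule dSS dTT dgQ hE' haa refl | rule derivative_eq_intros)?
    apply (rule dSS dTT dgQ hE' haa refl | rule derivative_eq_intros)?
    apply (rule dSS dTT dgQ hE' haa refl | rule derivative_eq_intros)?
    apply (rule dSS dTT dgQ hE' haa refl | rule derivative_eq_intros)?
    apply (rule dSS dTT dgQ hE' haa refl | rule derivative_eq_intros)?
    apply (rule dSS dTT dgQ hE' haa refl | rule derivative_eq_intros)?
    apply (rule dSS dTT dgQ hE' haa refl | rule derivative_eq_intros)?
    apply (rule dSS dTT dgQ hE' haa refl | rule derivative_eq_intros)?
    apply (rule dSS dTT dgQ hE' haa refl | rule derivative_eq_intros)?
    apply (rule dSS dTT dgQ hE' haa refl | rule derivative_eq_intros)?
    apply (rule dSS dTT dgQ hE' haa refl | rule derivative_eq_intros)?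
    apply (rule dSS dTT dgQ hE' haa refl | rule derivative_eq_intros)?
    apply (rule dSS dTT dgQ hE' haa refl | rule derivative_eq_intros)?
    apply (rule dSS dTT dgQ hE' haa refl | rule derivative_eq_intros)?
    apply (rule dSS dTT dgQ hE' haa refl | rule derivative_eq_intros)?
    apply (rule dSS dTT dgQ hE' haa refl | rule derivative_eq_intros)?
    apply (rule dSS dTT dgQ hE' haa refl | rule derivative_eq_intros)?
    apply (rule dSS dTT dgQ hE' haa refl | rule derivative_eq_intros)?
    apply (rule dSS dTT dgQ hE' haa refl | rule derivative_eq_intros)?
    apply (rule dSS dTT dgQ hE' haa refl | rule derivative_eq_intros)?
    apply (rule dSS dTT dgQ hE' haa refl | rule derivative_eq_intros)?
    apply (rule dSS dTT dgQ hE' haa refl | rule derivative_eq_intros)?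
    apply (rule dSS dTT dgQ hE' haa refl | rule derivative_eq_intros)?
    apply (rule dSS dTT dgQ hE' haa refl | rule derivative_eq_intros)?
    apply (rule dSS dTT dgQ hE' haa refl | rule derivative_eq_intros)?
    apply (rule dSS dTT dgQ hE' haa refl | rule derivative_eq_intros)?
    apply (rule dSS dTT dgQ hE' haa refl | rule derivative_eq_intros)?
    apply (rule dSS dTT dgQ hE' haa refl | rule derivative_eq_intros)?
    apply (rule dSS dTT dgQ hE' haa refl | rule derivative_eq_intros)?
    apply (rule dSS dTT dgQ hE' haa refl | rule derivative_eq_intros)?
    apply (rule dSS dTT dgQ hE' haa refl | rule derivative_eq_intros)?
    apply (rule dSS dTT dgQ hE' haa refl | rule derivative_eq_intros)?
    apply (rule dSS dTT dgQ hE' haa refl | rule derivative_eq_intros)?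
    apply (rule dSS dTT dgQ hE' haa refl | rule derivative_eq_intros)?
    apply (rule dSS dTT dgQ hE' haa refl | rule derivative_eq_intros)?
    apply (rule dSS dTT dgQ hE' haa refl | rule derivative_eq_intros)?
        apply (unfold G_def c_def A_def gen_eq q1_eq p11_eq p21_eq)
    by (rule alg2[OF naa])
  have "((\<lambda>s. integral\<^sup>L (MM x s) g) has_real_derivative integral\<^sup>L (MM x t) ?L) (at t within {0..})"
  proof (rule has_field_derivative_transform_within[OF deriv_Icc_Ici[OF dJ t] zero_less_one])
    show "t \<in> {0..}" using t by simp
    fix s :: real assume "s \<in> {0..}"
    then show "Jg s = integral\<^sup>L (MM x s) g"
      unfolding Jg_def using int_MM_cont[OF _ x cg, of s] by (simp add: q1_eq)
  qed
  then show ?thesis .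
qed

end

definition good :: "real measure \<Rightarrow> bool" where
  "good Q \<longleftrightarrow> prob_space Q \<and> sets Q = sets borel \<and> emeasure Q {0..1} = 1"

lemma good_AE: "good Q \<Longrightarrow> AE y in Q. y \<in> {0..1}"
proof -
  assume g: "good Q"
  interpret prob_space Q using g by (simp add: good_def)
  have "{0..1::real} \<in> sets Q" using g by (simp add: good_def)
  thus ?thesis using g by (subst AE_prob_1) (auto simp: good_def emeasure_eq_measure)
qed

lemma good_integrable:
  fixes f :: "real \<Rightarrow> real"
  assumes g: "good Q" and f: "continuous_on UNIV f"
  shows "integrable Q f"
proof -
  interpret prob_space Q using g by (simp add: good_def)
  obtain B where B: "\<And>v. v \<in> {0..1} \<Longrightarrow> \<bar>f v\<bar> \<le> B" using cont_bdd01[OF f] by blast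
  have fm: "f \<in> borel_measurable borel" using f by (simp add: borel_measurable_continuous_onI)
  have sQ: "sets Q = sets borel" using g by (simp add: good_def)
  have "f \<in> borel_measurable Q" by (subst measurable_cong_sets[OF sQ refl]) (rule fm)
  moreover have "AE y in Q. norm (f y) \<le> B"
    using good_AE[OF g] by (rule eventually_mono) (use B in auto)
  ultimately show ?thesis by (intro integrable_const_bound[where B=B]) auto
qed

lemma good_real_distr: "good Q \<Longrightarrow> real_distribution Q"
  by (simp add: good_def real_distribution_def real_distribution_axioms_def)

lemma tends_pow_fact: "(\<lambda>n. \<bar>t\<bar> ^ n / fact n :: real) \<longlonglongrightarrow> 0"
proof -
  have "summable (\<lambda>n. \<bar>t\<bar> ^ n /\<^sub>R fact n)" using exp_converges[of "\<bar>t\<bar>"] by (rule sums_summable)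
  then have "(\<lambda>n. \<bar>t\<bar> ^ n /\<^sub>R fact n) \<longlonglongrightarrow> 0" by (rule summable_LIMSEQ_zero)
  thus ?thesis by (simp add: divide_inverse mult.commute)
qed

lemma moments_eq:
  assumes g1: "good Q1" and g2: "good Q2"
    and m: "\<And>k. (\<integral>y. y ^ k \<partial>Q1) = (\<integral>y. y ^ k \<partial>Q2)"
  shows "Q1 = Q2"
proof (rule Levy_uniqueness[OF good_real_distr[OF g1] good_real_distr[OF g2]])
  interpret Q1: real_distribution Q1 using good_real_distr[OF g1] .
  interpret Q2: real_distribution Q2 using good_real_distr[OF g2] .
  have i1: "integrable Q1 (\<lambda>y. y ^ k)" for k by (rule good_integrable[OF g1]) (intro continuous_intros)
  have i2: "integrable Q2 (\<lambda>y. y ^ k)" for k by (rule good_integrable[OF g2]) (intro continuous_intros)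
  have e1: "(\<integral>y. \<bar>y\<bar> ^ n \<partial>Q1) \<le> 1" for n
  proof -
    have ae: "AE y in Q1. \<bar>y\<bar> ^ n \<le> 1"
      using good_AE[OF g1] by eventually_elim (auto intro!: power_le_one)
    have "(\<integral>y. \<bar>y\<bar> ^ n \<partial>Q1) \<le> (\<integral>y. 1 \<partial>Q1)"
      by (intro integral_mono_AE good_integrable[OF g1] ae) (auto intro!: continuous_intros)
    thus ?thesis using Q1.prob_space Q1.space_eq_univ by simp
  qed
  have e2: "(\<integral>y. \<bar>y\<bar> ^ n \<partial>Q2) \<le> 1" for n
  proof -
    have ae: "AE y in Q2. \<bar>y\<bar> ^ n \<le> 1"
      using good_AE[OF g2] by eventually_elim (auto intro!: power_le_one)
    have "(\<integral>y. \<bar>y\<bar> ^ n \<partial>Q2) \<le> (\<integral>y. 1 \<partial>Q2)"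
      by (intro integral_mono_AE good_integrable[OF g2] ae) (auto intro!: continuous_intros)
    thus ?thesis using Q2.prob_space Q2.space_eq_univ by simp
  qed
  show "char Q1 = char Q2"
  proof
    fix t :: real
    let ?s = "\<lambda>n. (\<Sum>k \<le> n. ((\<i> * t)^k / fact k) * complex_of_real (\<integral>y. y ^ k \<partial>Q1))"
    have b: "cmod (char Q1 t - char Q2 t) \<le> 4 * (\<bar>t\<bar> ^ n / fact n)" for n
    proof -
      have a1: "cmod (char Q1 t - ?s n) \<le> (2*\<bar>t\<bar>^n / fact n) * (\<integral>y. \<bar>y\<bar> ^ n \<partial>Q1)"
        using Q1.char_approx1[of n t] i1 by simp
      have a2: "cmod (char Q2 t - ?s n) \<le> (2*\<bar>t\<bar>^n / fact n) * (\<integral>y. \<bar>y\<bar> ^ n \<partial>Q2)"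
        using Q2.char_approx1[of n t] i2 by (simp add: m)
      have nn: "0 \<le> 2*\<bar>t\<bar>^n / fact n" by simp
      have "cmod (char Q1 t - char Q2 t) = cmod ((char Q1 t - ?s n) - (char Q2 t - ?s n))" by simp
      also have "\<dots> \<le> cmod (char Q1 t - ?s n) + cmod (char Q2 t - ?s n)"
        by (rule norm_triangle_ineq4)
      also have "\<dots> \<le> (2*\<bar>t\<bar>^n / fact n) * 1 + (2*\<bar>t\<bar>^n / fact n) * 1"
      proof (rule add_mono)
        show "cmod (char Q1 t - ?s n) \<le> (2*\<bar>t\<bar>^n / fact n) * 1"
          using a1 mult_left_mono[OF e1[of n] nn] by linarith
        show "cmod (char Q2 t - ?s n) \<le> (2*\<bar>t\<bar>^n / fact n) * 1"
          using a2 mult_left_mono[OF e2[of n] nn] by linarith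
      qed
      finally show ?thesis by simp
    qed
    have "(\<lambda>n. 4 * (\<bar>t\<bar> ^ n / fact n :: real)) \<longlonglongrightarrow> 4 * 0"
      by (intro tendsto_mult tendsto_const tends_pow_fact)
    then have "(\<lambda>n. 4 * (\<bar>t\<bar> ^ n / fact n :: real)) \<longlonglongrightarrow> 0" by simp
    then have "cmod (char Q1 t - char Q2 t) \<le> 0"
      by (rule LIMSEQ_le_const) (use b in auto)
    thus "char Q1 t = char Q2 t" by simp
  qed
qed

lemma ode_zero:
  fixes f :: "real \<Rightarrow> real" and l t :: real
  assumes d: "\<And>s. s \<ge> 0 \<Longrightarrow> (f has_real_derivative l * f s) (at s within {0..})"
    and f0: "f 0 = 0" and t: "t \<ge> 0"
  shows "f t = 0"
proof -
  have "\<exists>c. \<forall>s\<in>{0..}. exp (- l * s) * f s = c"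
  proof (rule has_field_derivative_zero_constant)
    show "convex {0::real..}" by (rule convex_real_interval)
    fix s :: real assume "s \<in> {0..}"
    then have df: "(f has_real_derivative l * f s) (at s within {0..})" using d by simp
    have de: "((\<lambda>s. exp (- l * s)) has_real_derivative exp (- l * s) * (- l)) (at s within {0..})"
      by (rule derivative_eq_intros refl)+ simp
    have "((\<lambda>s. exp (- l * s) * f s) has_real_derivative
        exp (- l * s) * (- l) * f s + l * f s * exp (- l * s)) (at s within {0..})"
      by (rule DERIV_mult[OF de df])
    then show "((\<lambda>s. exp (- l * s) * f s) has_real_derivative 0) (at s within {0..})"
      by (simp add: algebra_simps)
  qed
  then obtain c where c: "\<And>s. s \<ge> 0 \<Longrightarrow> exp (- l * s) * f s = c" by auto
  have "c = 0" using c[of 0] f0 by simp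
  thus ?thesis using c[OF t] by simp
qed


context fvl begin

lemma good_P: "fv_evolution \<theta>1 \<theta>2 P \<Longrightarrow> t \<ge> 0 \<Longrightarrow> good (P t)"
  by (simp add: fv_evolution_def good_def)

lemma good_MM: "t \<ge> 0 \<Longrightarrow> x \<in> {0..1} \<Longrightarrow> good (MM x t)"
  using prob_MM emeasure_MM_01 by (simp add: good_def)

lemma evol_MM: "x \<in> {0..1} \<Longrightarrow> fv_evolution \<theta>1 \<theta>2 (MM x)"
  unfolding fv_evolution_def using prob_MM emeasure_MM_01 by (auto intro!: FE_MM)

lemma mom_deriv:
  assumes ev: "fv_evolution \<theta>1 \<theta>2 P" and k: "k \<ge> 1" and t: "t \<ge> 0"
  shows "((\<lambda>s. \<integral>y. y ^ k \<partial>P s) has_real_derivative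
     (\<integral>y. y \<partial>P t) - (1 + th * real k / 2) * (\<integral>y. y ^ k \<partial>P t) + (\<theta>1 * real k / 2) * (\<integral>y. y ^ (k - 1) \<partial>P t))
     (at t within {0..})"
proof -
  define dg where "dg y = real k * y ^ (k - 1)" for y :: real
  define d2g where "d2g y = real k * (real (k - 1) * y ^ (k - 1 - 1))" for y :: real
  have h1: "((\<lambda>y. y ^ k) has_real_derivative dg y) (at y)" for y
    unfolding dg_def using DERIV_pow[of k y] by simp
  have h2: "(dg has_real_derivative d2g y) (at y)" for y
    unfolding dg_def d2g_def by (auto intro!: derivative_eq_intros)
  have h3: "continuous_on UNIV d2g" unfolding d2g_def by (intro continuous_intros)
  have D: "((\<lambda>s. \<integral>y. y ^ k \<partial>P s) has_real_derivative (\<integral>y. fv_gen \<theta>1 \<theta>2 (\<lambda>y. y ^ k) dg y \<partial>P t))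
     (at t within {0..})"
    using ev t h1 h2 h3 unfolding fv_evolution_def by blast
  have pw: "fv_gen \<theta>1 \<theta>2 (\<lambda>y. y ^ k) dg y = y - (1 + th * real k / 2) * y ^ k + (\<theta>1 * real k / 2) * y ^ (k - 1)" for y
  proof -
    obtain m where m: "k = Suc m" using k by (cases k) auto
    show ?thesis unfolding fv_gen_def dg_def m by (simp add: field_simps)
  qed
  have gP: "good (P t)" by (rule good_P[OF ev t])
  have ip: "integrable (P t) (\<lambda>y. y ^ n)" for n by (rule good_integrable[OF gP]) (intro continuous_intros)
  have ip1: "integrable (P t) (\<lambda>y. y)" by (rule good_integrable[OF gP]) (intro continuous_intros)
  have "(\<integral>y. fv_gen \<theta>1 \<theta>2 (\<lambda>y. y ^ k) dg y \<partial>P t)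
     = (\<integral>y. y - (1 + th * real k / 2) * y ^ k + (\<theta>1 * real k / 2) * y ^ (k - 1) \<partial>P t)"
    by (simp add: pw)
  also have "\<dots> = (\<integral>y. y \<partial>P t) - (1 + th * real k / 2) * (\<integral>y. y ^ k \<partial>P t) + (\<theta>1 * real k / 2) * (\<integral>y. y ^ (k - 1) \<partial>P t)"
    using ip ip1 by simp
  finally show ?thesis using D by simp
qed

lemma uniq:
  assumes evP: "fv_evolution \<theta>1 \<theta>2 P" and evQ: "fv_evolution \<theta>1 \<theta>2 Q"
    and P0: "P 0 = Q 0" and t: "t \<ge> 0"
  shows "P t = Q t"
proof -
  define d where "d k s = (\<integral>y. y ^ k \<partial>P s) - (\<integral>y. y ^ k \<partial>Q s)" for k s
  have D: "\<forall>s\<ge>0. d k s = 0" for k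
  proof (induction k rule: less_induct)
    case (less k)
    show ?case
    proof (cases "k = 0")
      case True
      show ?thesis
      proof (intro allI impI)
        fix s :: real assume s: "s \<ge> 0"
        interpret p: prob_space "P s" using good_P[OF evP s] by (simp add: good_def)
        interpret q: prob_space "Q s" using good_P[OF evQ s] by (simp add: good_def)
        show "d k s = 0" unfolding d_def True by (simp add: p.prob_space q.prob_space)
      qed
    next
      case False
      then have k1: "k \<ge> 1" by simp
      define c where "c = 1 + th * real k / 2"
      define b where "b = \<theta>1 * real k / 2"
      define l where "l = (if k = 1 then 1 - c else - c)"
      have dd: "(d k has_real_derivative l * d k s) (at s within {0..})" if s: "s \<ge> 0" for s
      proof -
        have "(d k has_real_derivative (d 1 s - c * d k s + b * d (k - 1) s)) (at s within {0..})"
          unfolding d_def[abs_def]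
          using DERIV_diff[OF mom_deriv[OF evP k1 s] mom_deriv[OF evQ k1 s]]
          by (simp add: c_def b_def algebra_simps)
        moreover have "d 1 s - c * d k s + b * d (k - 1) s = l * d k s"
        proof (cases "k = 1")
          case True
          then show ?thesis using less.IH[of 0] s by (simp add: l_def algebra_simps)
        next
          case False
          then have "d 1 s = 0" "d (k - 1) s = 0" using less.IH[of 1] less.IH[of "k - 1"] k1 s by auto
          then show ?thesis using False by (simp add: l_def)
        qed
        ultimately show ?thesis by simp
      qed
      have "d k 0 = 0" unfolding d_def using P0 by simp
      then show ?thesis using ode_zero[OF dd] by auto
    qed
  qed
  show ?thesis
  proof (rule moments_eq[OF good_P[OF evP t] good_P[OF evQ t]])
    fix k show "(\<integral>y. y ^ k \<partial>P t) = (\<integral>y. y ^ k \<partial>Q t)" using D[of k] t unfolding d_def by auto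
  qed
qed

lemma conj1:
  assumes x: "x \<in> {0..1}" and sP: "\<forall>t\<ge>0. sets (P t) = sets borel"
  shows "fv_law \<theta>1 \<theta>2 x P \<longleftrightarrow>
            (\<forall>t\<ge>0. \<forall>A\<in>sets borel. emeasure (P t) A = ennreal (fv_mix \<theta>1 \<theta>2 x t A))"
proof
  assume L: "fv_law \<theta>1 \<theta>2 x P"
  show "\<forall>t\<ge>0. \<forall>A\<in>sets borel. emeasure (P t) A = ennreal (fv_mix \<theta>1 \<theta>2 x t A)"
  proof (intro allI impI ballI)
    fix t :: real and A :: "real set" assume t: "t \<ge> 0" and A: "A \<in> sets borel"
    have "P t = MM x t"
      using L by (intro uniq[OF _ evol_MM[OF x] _ t]) (auto simp: fv_law_def MM_0[OF x])
    then show "emeasure (P t) A = ennreal (fv_mix \<theta>1 \<theta>2 x t A)" using emeasure_MM[OF t x A] by simp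
  qed
next
  assume R: "\<forall>t\<ge>0. \<forall>A\<in>sets borel. emeasure (P t) A = ennreal (fv_mix \<theta>1 \<theta>2 x t A)"
  have PM: "P t = MM x t" if t: "t \<ge> 0" for t
  proof (rule measure_eqI)
    show "sets (P t) = sets (MM x t)" using sP t by simp
    fix A assume "A \<in> sets (P t)"
    then have A: "A \<in> sets borel" using sP t by simp
    show "emeasure (P t) A = emeasure (MM x t) A" using R t A emeasure_MM[OF t x A] by simp
  qed
  have ev: "fv_evolution \<theta>1 \<theta>2 (MM x)" by (rule evol_MM[OF x])
  have A1: "\<forall>t\<ge>0. sets (P t) = sets borel \<and> prob_space (P t) \<and> emeasure (P t) {0..1} = 1"
    using ev PM unfolding fv_evolution_def by auto
  have A2: "\<forall>g dg d2g. (\<forall>y. (g has_real_derivative dg y) (at y)) \<and>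
                 (\<forall>y. (dg has_real_derivative d2g y) (at y)) \<and> continuous_on UNIV d2g \<longrightarrow>
        (\<forall>t\<ge>0. ((\<lambda>s. \<integral>y. g y \<partial>P s) has_real_derivative
                    (\<integral>y. fv_gen \<theta>1 \<theta>2 g dg y \<partial>P t)) (at t within {0..}))"
  proof (intro allI impI)
    fix g dg d2g :: "real \<Rightarrow> real" and t :: real
    assume gg: "(\<forall>y. (g has_real_derivative dg y) (at y)) \<and> (\<forall>y. (dg has_real_derivative d2g y) (at y)) \<and> continuous_on UNIV d2g"
      and t: "t \<ge> 0"
    have "((\<lambda>s. \<integral>y. g y \<partial>MM x s) has_real_derivative (\<integral>y. fv_gen \<theta>1 \<theta>2 g dg y \<partial>MM x t)) (at t within {0..})"
      using ev gg t unfolding fv_evolution_def by blast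
    then show "((\<lambda>s. \<integral>y. g y \<partial>P s) has_real_derivative (\<integral>y. fv_gen \<theta>1 \<theta>2 g dg y \<partial>P t)) (at t within {0..})"
      unfolding PM[OF t]
      by (rule has_field_derivative_transform_within[OF _ zero_less_one]) (use t PM in auto)
  qed
  have "fv_evolution \<theta>1 \<theta>2 P" unfolding fv_evolution_def using A1 A2 by blast
  then show "fv_law \<theta>1 \<theta>2 x P" unfolding fv_law_def using PM[of 0] MM_0[OF x] by simp
qed

end

context fvl begin

lemma aa_lim: "(aa \<longlongrightarrow> 0) at_top"
proof -
  have "LIM t at_top. th / 2 * t :> at_top"
    by (rule filterlim_tendsto_pos_mult_at_top[OF tendsto_const _ filterlim_ident]) (use th_pos in simp)
  then have "LIM t at_top. - th * t / 2 :> at_bot"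
    unfolding filterlim_uminus_at_bot by simp
  then have "((\<lambda>t. exp (- th * t / 2)) \<longlongrightarrow> 0) at_top"
    by (rule filterlim_compose[OF exp_at_bot])
  thus ?thesis unfolding aa_def[abs_def] .
qed

lemma conj3:
  "\<forall>\<xi>\<in>{0<..<1} - {pp}. ((\<lambda>t. fv_dens \<theta>1 \<theta>2 x t \<xi>) \<longlongrightarrow> fv_stat \<theta>1 \<theta>2 \<xi>) at_top"
proof
  fix \<xi> assume \<xi>: "\<xi> \<in> {0<..<1} - {pp}"
  have aa': "exp (- th * t / 2) = aa t" for t unfolding aa_def ..
  show "((\<lambda>t. fv_dens \<theta>1 \<theta>2 x t \<xi>) \<longlongrightarrow> fv_stat \<theta>1 \<theta>2 \<xi>) at_top"
  proof (cases "\<xi> > pp")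
    case True
    define R where "R = ((\<xi> - pp) / (1 - pp)) powr (2 / th - 1)"
    have ev: "eventually (\<lambda>t. aa t < (\<xi> - pp) / (1 - pp)) at_top"
      by (rule order_tendstoD(2)[OF aa_lim]) (use True p_lt1 in simp)
    have ev2: "eventually (\<lambda>t. fv_dens \<theta>1 \<theta>2 x t \<xi> =
        (pp + aa t * (x - pp) * ((1 - pp) / (\<xi> - pp))) * (2 / th) * R * (1 / (1 - pp))) at_top"
      using ev
    proof eventually_elim
      case (elim t)
      then have "(1 - pp) * aa t < \<xi> - pp" using p_lt1 by (simp add: field_simps)
      then show ?case using \<xi> unfolding fv_dens_def Let_def aa' R_def by auto
    qed
    have "((\<lambda>t. (pp + aa t * (x - pp) * ((1 - pp) / (\<xi> - pp))) * (2 / th) * R * (1 / (1 - pp)))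
        \<longlongrightarrow> (pp + 0 * (x - pp) * ((1 - pp) / (\<xi> - pp))) * (2 / th) * R * (1 / (1 - pp))) at_top"
      by (intro tendsto_intros aa_lim)
    moreover have "fv_stat \<theta>1 \<theta>2 \<xi> = (pp + 0 * (x - pp) * ((1 - pp) / (\<xi> - pp))) * (2 / th) * R * (1 / (1 - pp))"
      using \<xi> True unfolding fv_stat_def Let_def R_def by auto
    ultimately show ?thesis using tendsto_cong[OF ev2] by simp
  next
    case False
    then have lt: "\<xi> < pp" using \<xi> by auto
    define R where "R = (1 - \<xi> / pp) powr (2 / th - 1)"
    have ev: "eventually (\<lambda>t. aa t < 1 - \<xi> / pp) at_top"
      by (rule order_tendstoD(2)[OF aa_lim]) (use lt p_pos in simp)
    have ev2: "eventually (\<lambda>t. fv_dens \<theta>1 \<theta>2 x t \<xi> =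
        (1 - pp - aa t * (x - pp) * inverse (1 - \<xi> / pp)) * (2 / th) * R * (1 / pp)) at_top"
      using ev
    proof eventually_elim
      case (elim t)
      then have "\<xi> < pp * (1 - aa t)" using p_pos by (simp add: field_simps)
      moreover have "\<not> \<xi> > pp + (1 - pp) * aa t"
        using lt p_lt1 aa_pos[of t] by (simp add: not_less) (metis add_increasing2 less_eq_real_def mult_nonneg_nonneg diff_ge_0_iff_ge lt)
      ultimately show ?case using \<xi> unfolding fv_dens_def Let_def aa' R_def by auto
    qed
    have "((\<lambda>t. (1 - pp - aa t * (x - pp) * inverse (1 - \<xi> / pp)) * (2 / th) * R * (1 / pp))
        \<longlongrightarrow> (1 - pp - 0 * (x - pp) * inverse (1 - \<xi> / pp)) * (2 / th) * R * (1 / pp)) at_top"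
      by (intro tendsto_intros aa_lim)
    moreover have "fv_stat \<theta>1 \<theta>2 \<xi> = (1 - pp - 0 * (x - pp) * inverse (1 - \<xi> / pp)) * (2 / th) * R * (1 / pp)"
      using \<xi> lt unfolding fv_stat_def Let_def R_def by auto
    ultimately show ?thesis using tendsto_cong[OF ev2] by simp
  qed
qed

end

context fvl begin

lemma aa_powr: "aa \<tau> powr (2 / th - 1) = exp (- \<tau>) / aa \<tau>"
proof -
  have "aa \<tau> powr (2 / th - 1) = exp ((2 / th - 1) * (- th * \<tau> / 2))"
    unfolding aa_def powr_def by simp
  also have "(2 / th - 1) * (- th * \<tau> / 2) = - \<tau> - (- th * \<tau> / 2)"
    using th_pos by (simp add: field_simps)
  also have "exp (- \<tau> - (- th * \<tau> / 2)) = exp (- \<tau>) / aa \<tau>"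
    unfolding aa_def by (rule exp_diff)
  finally show ?thesis .
qed

definition d1 :: "real \<Rightarrow> real \<Rightarrow> real \<Rightarrow> real" where
  "d1 x t \<xi> = (pp + aa t * (x - pp) * ((1 - pp) / (\<xi> - pp))) * (2 / th)
          * ((\<xi> - pp) / (1 - pp)) powr (2 / th - 1) * (1 / (1 - pp))"
definition d2 :: "real \<Rightarrow> real \<Rightarrow> real \<Rightarrow> real" where
  "d2 x t \<xi> = (1 - pp - aa t * (x - pp) * inverse (1 - \<xi> / pp)) * (2 / th)
          * (1 - \<xi> / pp) powr (2 / th - 1) * (1 / pp)"

lemma dens_eq: "fv_dens \<theta>1 \<theta>2 x t \<xi> = indicator {fv_p11 \<theta>1 \<theta>2 t<..1} \<xi> * d1 x t \<xi>
    + indicator {0..<fv_p21 \<theta>1 \<theta>2 t} \<xi> * d2 x t \<xi>"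
proof -
  have aa': "exp (- th * t / 2) = aa t" unfolding aa_def ..
  have y: "fv_p11 \<theta>1 \<theta>2 t = pp + (1 - pp) * aa t" by (rule p11_eq)
  have z: "fv_p21 \<theta>1 \<theta>2 t = pp * (1 - aa t)" by (simp add: p21_eq algebra_simps)
  have yp: "pp + (1 - pp) * aa t > pp" using p_lt1 aa_pos[of t] by simp
  have zp: "pp * (1 - aa t) < pp" using p_pos aa_pos[of t] by simp
  have y0: "pp + (1 - pp) * aa t > 0" using yp p_pos by linarith
  show ?thesis
    unfolding fv_dens_def Let_def aa' y z d1_def[symmetric] d2_def[symmetric]
    using yp zp y0 p_lt1 by (auto simp: indicator_def)
qed

lemma alg3: fixes q th a A E p x :: real
  shows "q \<noteq> 0 \<Longrightarrow> th \<noteq> 0 \<Longrightarrow> a \<noteq> 0 \<Longrightarrow>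
    (p + A * (x - p) * (q / (q * a))) * (2 / th) * (E / a) * (1 / q) * (q * (th / 2) * a) = E * (p + (x - p) * (A / a))"
  by (simp add: field_simps)

lemma d1_y: "d1 x t (fv_p11 \<theta>1 \<theta>2 \<tau>) * ((1 - pp) * (th / 2) * aa \<tau>) = exp (- \<tau>) * fv_q1 \<theta>1 \<theta>2 (t - \<tau>) x"
proof -
  have e: "(fv_p11 \<theta>1 \<theta>2 \<tau> - pp) / (1 - pp) = aa \<tau>" using p_lt1 by (simp add: p11_eq)
  have e2: "fv_p11 \<theta>1 \<theta>2 \<tau> - pp = (1 - pp) * aa \<tau>" by (simp add: p11_eq)
  show ?thesis
    unfolding d1_def unfolding e unfolding aa_powr q1_eq aa_diff e2
    by (rule alg3) (use p_lt1 th_pos aa_pos[of \<tau>] in auto)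
qed

lemma d2_z: "d2 x t (fv_p21 \<theta>1 \<theta>2 \<tau>) * (pp * (th / 2) * aa \<tau>) = exp (- \<tau>) * fv_q2 \<theta>1 \<theta>2 (t - \<tau>) x"
proof -
  have e: "1 - fv_p21 \<theta>1 \<theta>2 \<tau> / pp = aa \<tau>" using p_pos by (simp add: p21_eq field_simps)
  show ?thesis
    unfolding d2_def e aa_powr q2_eq aa_diff
    using p_pos th_pos aa_pos[of \<tau>] aa_pos[of t] by (simp add: field_simps)
qed

end

context fvl begin

lemma d1_meas[measurable]: "d1 x t \<in> borel_measurable borel"
  unfolding d1_def by measurable
lemma d2_meas[measurable]: "d2 x t \<in> borel_measurable borel"
  unfolding d2_def by measurable

lemma cont_d2: "continuous_on {0..fv_p21 \<theta>1 \<theta>2 t} (d2 x t)"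
proof -
  have pos: "1 - \<xi> / pp > 0" if "\<xi> \<in> {0..fv_p21 \<theta>1 \<theta>2 t}" for \<xi>
  proof -
    have "\<xi> \<le> pp - pp * aa t" using that by (simp add: p21_eq)
    then have "\<xi> / pp \<le> 1 - aa t" using p_pos by (simp add: field_simps)
    thus ?thesis using aa_pos[of t] by simp
  qed
  have c1: "continuous_on {0..fv_p21 \<theta>1 \<theta>2 t} (\<lambda>\<xi>. 1 - \<xi> / pp)" by (intro continuous_intros) (use p_pos in auto)
  have ne: "\<forall>\<xi>\<in>{0..fv_p21 \<theta>1 \<theta>2 t}. 1 - \<xi> / pp \<noteq> 0" using pos by force
  have c2: "continuous_on {0..fv_p21 \<theta>1 \<theta>2 t} (\<lambda>\<xi>. inverse (1 - \<xi> / pp))"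
    by (rule continuous_on_inverse[OF c1 ne])
  have c3: "continuous_on {0..fv_p21 \<theta>1 \<theta>2 t} (\<lambda>\<xi>. (1 - \<xi> / pp) powr (2 / th - 1))"
    by (rule continuous_on_powr[OF c1 continuous_on_const ne])
  show ?thesis unfolding d2_def
    by (intro continuous_on_mult continuous_on_diff continuous_on_const c2 c3)
qed

lemma cont_d1: "continuous_on {fv_p11 \<theta>1 \<theta>2 t..1} (d1 x t)"
proof -
  have pos: "\<xi> - pp > 0" if "\<xi> \<in> {fv_p11 \<theta>1 \<theta>2 t..1}" for \<xi>
  proof -
    have "\<xi> \<ge> pp + (1 - pp) * aa t" using that by (simp add: p11_eq)
    thus ?thesis using aa_pos[of t] p_lt1 by (smt (verit) mult_pos_pos)
  qed
  have c1: "continuous_on {fv_p11 \<theta>1 \<theta>2 t..1} (\<lambda>\<xi>. \<xi> - pp)" by (intro continuous_intros)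
  have ne: "\<forall>\<xi>\<in>{fv_p11 \<theta>1 \<theta>2 t..1}. \<xi> - pp \<noteq> 0" using pos by force
  have c2: "continuous_on {fv_p11 \<theta>1 \<theta>2 t..1} (\<lambda>\<xi>. (1 - pp) / (\<xi> - pp))"
    by (rule continuous_on_divide[OF continuous_on_const c1 ne])
  have c1': "continuous_on {fv_p11 \<theta>1 \<theta>2 t..1} (\<lambda>\<xi>. (\<xi> - pp) / (1 - pp))" by (intro continuous_intros) (use p_lt1 in auto)
  have ne': "\<forall>\<xi>\<in>{fv_p11 \<theta>1 \<theta>2 t..1}. (\<xi> - pp) / (1 - pp) \<noteq> 0" using pos p_lt1 by force
  have c3: "continuous_on {fv_p11 \<theta>1 \<theta>2 t..1} (\<lambda>\<xi>. ((\<xi> - pp) / (1 - pp)) powr (2 / th - 1))"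
    by (rule continuous_on_powr[OF c1' continuous_on_const ne'])
  show ?thesis unfolding d1_def
    by (intro continuous_on_mult continuous_on_add continuous_on_const c2 c3)
qed

lemma bdd_compact:
  fixes h :: "real \<Rightarrow> real"
  assumes "continuous_on {a..b} h"
  obtains C where "\<And>v. v \<in> {a..b} \<Longrightarrow> \<bar>h v\<bar> \<le> C"
proof -
  have "bounded (h ` {a..b})"
    by (intro compact_imp_bounded compact_continuous_image assms) auto
  then obtain C where "\<forall>y\<in>h ` {a..b}. norm y \<le> C" by (auto simp: bounded_iff)
  then have "\<And>v. v \<in> {a..b} \<Longrightarrow> \<bar>h v\<bar> \<le> C" by auto
  thus ?thesis by (rule that)
qed

lemma subZ:
  assumes t: "t \<ge> 0" and x: "x \<in> {0..1}" and F[measurable]: "F \<in> borel_measurable borel"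
    and B: "\<And>v. v \<in> {0..1} \<Longrightarrow> \<bar>F v\<bar> \<le> B"
  shows "integrable lborel (\<lambda>\<xi>. indicator {0..fv_p21 \<theta>1 \<theta>2 t} \<xi> * (F \<xi> * d2 x t \<xi>))"
    "(\<integral>\<xi>. F \<xi> * d2 x t \<xi> * indicator {0..fv_p21 \<theta>1 \<theta>2 t} \<xi> \<partial>lborel)
     = (\<integral>\<tau>. exp (- \<tau>) * fv_q2 \<theta>1 \<theta>2 (t - \<tau>) x * F (fv_p21 \<theta>1 \<theta>2 \<tau>) * indicator {0..t} \<tau> \<partial>lborel)"
proof -
  obtain C where C: "\<And>v. v \<in> {0..fv_p21 \<theta>1 \<theta>2 t} \<Longrightarrow> \<bar>d2 x t v\<bar> \<le> C"
    using bdd_compact[OF cont_d2] by blast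
  have Z01: "fv_p21 \<theta>1 \<theta>2 t \<le> 1" using p21_01[OF t] by simp
  show int: "integrable lborel (\<lambda>\<xi>. indicator {0..fv_p21 \<theta>1 \<theta>2 t} \<xi> * (F \<xi> * d2 x t \<xi>))"
  proof (rule integrable_ind_bdd[where B="B * C"])
    fix u assume u: "u \<in> {0..fv_p21 \<theta>1 \<theta>2 t}"
    then have "\<bar>F u\<bar> \<le> B" using B Z01 by auto
    moreover have "\<bar>d2 x t u\<bar> \<le> C" using C u by auto
    ultimately show "\<bar>F u * d2 x t u\<bar> \<le> B * C" unfolding abs_mult
      by (intro mult_mono) auto
  qed (use p21_01[OF t] in auto)
  have z0: "fv_p21 \<theta>1 \<theta>2 0 = 0" by (simp add: p21_eq)
  have dz: "(fv_p21 \<theta>1 \<theta>2 has_real_derivative pp * (th / 2) * aa \<tau>) (at \<tau>)" for \<tau>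
    unfolding p21_eq[abs_def] by (auto intro!: derivative_eq_intros aa_deriv)
  have "(LBINT \<xi>. (F \<xi> * d2 x t \<xi>) * indicator {fv_p21 \<theta>1 \<theta>2 0..fv_p21 \<theta>1 \<theta>2 t} \<xi>)
     = (LBINT \<tau>. (F (fv_p21 \<theta>1 \<theta>2 \<tau>) * d2 x t (fv_p21 \<theta>1 \<theta>2 \<tau>)) * (pp * (th / 2) * aa \<tau>) * indicator {0..t} \<tau>)"
  proof (rule integral_substitution(2))
    show "set_integrable lborel {fv_p21 \<theta>1 \<theta>2 0..fv_p21 \<theta>1 \<theta>2 t} (\<lambda>\<xi>. F \<xi> * d2 x t \<xi>)"
      using int unfolding z0 set_integrable_def by simp
    show "continuous_on {0..t} (\<lambda>\<tau>. pp * (th / 2) * aa \<tau>)" by (intro continuous_intros cont_aa)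
    show "pp * (th / 2) * aa \<tau> \<ge> 0" for \<tau> using p_pos th_pos aa_pos[of \<tau>] by simp
  qed (use t dz in auto)
  also have "\<dots> = (\<integral>\<tau>. exp (- \<tau>) * fv_q2 \<theta>1 \<theta>2 (t - \<tau>) x * F (fv_p21 \<theta>1 \<theta>2 \<tau>) * indicator {0..t} \<tau> \<partial>lborel)"
    by (rule Bochner_Integration.integral_cong[OF refl]) (use d2_z[of x t] in \<open>simp add: algebra_simps\<close>)
  finally show "(\<integral>\<xi>. F \<xi> * d2 x t \<xi> * indicator {0..fv_p21 \<theta>1 \<theta>2 t} \<xi> \<partial>lborel)
     = (\<integral>\<tau>. exp (- \<tau>) * fv_q2 \<theta>1 \<theta>2 (t - \<tau>) x * F (fv_p21 \<theta>1 \<theta>2 \<tau>) * indicator {0..t} \<tau> \<partial>lborel)"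
    unfolding z0 by simp
qed

lemma subY:
  assumes t: "t \<ge> 0" and x: "x \<in> {0..1}" and F[measurable]: "F \<in> borel_measurable borel"
    and B: "\<And>v. v \<in> {0..1} \<Longrightarrow> \<bar>F v\<bar> \<le> B"
  shows "integrable lborel (\<lambda>\<xi>. indicator {fv_p11 \<theta>1 \<theta>2 t..1} \<xi> * (F \<xi> * d1 x t \<xi>))"
    "(\<integral>\<xi>. F \<xi> * d1 x t \<xi> * indicator {fv_p11 \<theta>1 \<theta>2 t..1} \<xi> \<partial>lborel)
     = (\<integral>\<tau>. exp (- \<tau>) * fv_q1 \<theta>1 \<theta>2 (t - \<tau>) x * F (fv_p11 \<theta>1 \<theta>2 \<tau>) * indicator {0..t} \<tau> \<partial>lborel)"
proof -
  obtain C where C: "\<And>v. v \<in> {fv_p11 \<theta>1 \<theta>2 t..1} \<Longrightarrow> \<bar>d1 x t v\<bar> \<le> C"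
    using bdd_compact[OF cont_d1] by blast
  have Y01: "fv_p11 \<theta>1 \<theta>2 t \<ge> 0" "fv_p11 \<theta>1 \<theta>2 t \<le> 1" using p11_01[OF t] by auto
  show int: "integrable lborel (\<lambda>\<xi>. indicator {fv_p11 \<theta>1 \<theta>2 t..1} \<xi> * (F \<xi> * d1 x t \<xi>))"
  proof (rule integrable_ind_bdd[where B="B * C"])
    fix u assume u: "u \<in> {fv_p11 \<theta>1 \<theta>2 t..1}"
    then have "\<bar>F u\<bar> \<le> B" using B Y01 by auto
    moreover have "\<bar>d1 x t u\<bar> \<le> C" using C u by auto
    ultimately show "\<bar>F u * d1 x t u\<bar> \<le> B * C" unfolding abs_mult
      by (intro mult_mono) auto
  qed (use Y01 in auto)
  define g where "g s = fv_p11 \<theta>1 \<theta>2 (- s)" for s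
  have g0: "g 0 = 1" unfolding g_def by (simp add: p11_eq)
  have gt: "g (- t) = fv_p11 \<theta>1 \<theta>2 t" unfolding g_def by simp
  have dg: "(g has_real_derivative (1 - pp) * (th / 2) * aa (- s)) (at s)" for s
    unfolding g_def[abs_def] p11_eq
    by (rule derivative_eq_intros refl aa_chain_eq | simp)+
  have "(LBINT \<xi>. (F \<xi> * d1 x t \<xi>) * indicator {g (- t)..g 0} \<xi>)
     = (LBINT s. (F (g s) * d1 x t (g s)) * ((1 - pp) * (th / 2) * aa (- s)) * indicator {- t..0} s)"
  proof (rule integral_substitution(2))
    show "set_integrable lborel {g (- t)..g 0} (\<lambda>\<xi>. F \<xi> * d1 x t \<xi>)"
      using int unfolding g0 gt set_integrable_def by simp
    show "continuous_on {- t..0} (\<lambda>s. (1 - pp) * (th / 2) * aa (- s))"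
      by (intro continuous_intros continuous_on_compose2[OF cont_aa]) auto
    show "(1 - pp) * (th / 2) * aa (- s) \<ge> 0" for s using p_lt1 th_pos aa_pos[of "- s"] by simp
  qed (use t dg in simp_all)
  also have "\<dots> = (LBINT \<tau>. (F (g (- \<tau>)) * d1 x t (g (- \<tau>))) * ((1 - pp) * (th / 2) * aa \<tau>) * indicator {- t..0} (- \<tau>))"
    by (subst lborel_integral_real_affine[where c="-1" and t=0]) simp_all
  also have "\<dots> = (\<integral>\<tau>. exp (- \<tau>) * fv_q1 \<theta>1 \<theta>2 (t - \<tau>) x * F (fv_p11 \<theta>1 \<theta>2 \<tau>) * indicator {0..t} \<tau> \<partial>lborel)"
  proof (rule Bochner_Integration.integral_cong[OF refl])
    fix \<tau> :: real
    have ind: "indicator {- t..0} (- \<tau>) = (indicator {0..t} \<tau> :: real)" by (auto simp: indicator_def)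
    have "(F (g (- \<tau>)) * d1 x t (g (- \<tau>))) * ((1 - pp) * (th / 2) * aa \<tau>) * indicator {- t..0} (- \<tau>)
        = F (fv_p11 \<theta>1 \<theta>2 \<tau>) * (d1 x t (fv_p11 \<theta>1 \<theta>2 \<tau>) * ((1 - pp) * (th / 2) * aa \<tau>)) * indicator {0..t} \<tau>"
      unfolding g_def ind by (simp add: mult_ac)
    also have "\<dots> = exp (- \<tau>) * fv_q1 \<theta>1 \<theta>2 (t - \<tau>) x * F (fv_p11 \<theta>1 \<theta>2 \<tau>) * indicator {0..t} \<tau>"
      unfolding d1_y by (simp add: mult_ac)
    finally show "(F (g (- \<tau>)) * d1 x t (g (- \<tau>))) * ((1 - pp) * (th / 2) * aa \<tau>) * indicator {- t..0} (- \<tau>)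
        = exp (- \<tau>) * fv_q1 \<theta>1 \<theta>2 (t - \<tau>) x * F (fv_p11 \<theta>1 \<theta>2 \<tau>) * indicator {0..t} \<tau>" .
  qed
  finally show "(\<integral>\<xi>. F \<xi> * d1 x t \<xi> * indicator {fv_p11 \<theta>1 \<theta>2 t..1} \<xi> \<partial>lborel)
     = (\<integral>\<tau>. exp (- \<tau>) * fv_q1 \<theta>1 \<theta>2 (t - \<tau>) x * F (fv_p11 \<theta>1 \<theta>2 \<tau>) * indicator {0..t} \<tau> \<partial>lborel)"
    unfolding g0 gt .
qed

end

context fvl begin

lemma gen_dens:
  assumes t: "t \<ge> 0" and x: "x \<in> {0..1}" and F[measurable]: "F \<in> borel_measurable borel"
    and B: "\<And>v. v \<in> {0..1} \<Longrightarrow> \<bar>F v\<bar> \<le> B"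
  shows "integrable lborel (\<lambda>\<xi>. F \<xi> * fv_dens \<theta>1 \<theta>2 x t \<xi>)"
    "(LBINT \<tau>:{0<..<t}. exp (- \<tau>) * (fv_q1 \<theta>1 \<theta>2 (t - \<tau>) x * F (fv_p11 \<theta>1 \<theta>2 \<tau>)
           + fv_q2 \<theta>1 \<theta>2 (t - \<tau>) x * F (fv_p21 \<theta>1 \<theta>2 \<tau>)))
     = (\<integral>\<xi>. F \<xi> * fv_dens \<theta>1 \<theta>2 x t \<xi> \<partial>lborel)"
proof -
  let ?Y = "fv_p11 \<theta>1 \<theta>2 t" and ?Z = "fv_p21 \<theta>1 \<theta>2 t"
  note iY = subY(1)[OF t x F B] and iZ = subZ(1)[OF t x F B]
  have dm[measurable]: "fv_dens \<theta>1 \<theta>2 x t \<in> borel_measurable borel"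
    unfolding dens_eq[abs_def] by measurable
  have ae: "AE \<xi> in lborel. indicator {?Y..1} \<xi> * (F \<xi> * d1 x t \<xi>) + indicator {0..?Z} \<xi> * (F \<xi> * d2 x t \<xi>)
       = F \<xi> * fv_dens \<theta>1 \<theta>2 x t \<xi>"
    using AE_lborel_singleton[of ?Y] AE_lborel_singleton[of ?Z]
    by eventually_elim (auto simp: dens_eq indicator_def algebra_simps)
  have isum: "integrable lborel (\<lambda>\<xi>. indicator {?Y..1} \<xi> * (F \<xi> * d1 x t \<xi>) + indicator {0..?Z} \<xi> * (F \<xi> * d2 x t \<xi>))"
    using iY iZ by simp
  show "integrable lborel (\<lambda>\<xi>. F \<xi> * fv_dens \<theta>1 \<theta>2 x t \<xi>)"
    by (rule integrable_cong_AE_imp[OF isum _ ae]) measurable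
  have "(\<integral>\<xi>. F \<xi> * fv_dens \<theta>1 \<theta>2 x t \<xi> \<partial>lborel)
      = (\<integral>\<xi>. indicator {?Y..1} \<xi> * (F \<xi> * d1 x t \<xi>) + indicator {0..?Z} \<xi> * (F \<xi> * d2 x t \<xi>) \<partial>lborel)"
    by (rule integral_cong_AE[symmetric]) (use ae in measurable)
  also have "\<dots> = (\<integral>\<xi>. F \<xi> * d1 x t \<xi> * indicator {?Y..1} \<xi> \<partial>lborel) + (\<integral>\<xi>. F \<xi> * d2 x t \<xi> * indicator {0..?Z} \<xi> \<partial>lborel)"
    using iY iZ by (simp add: mult_ac)
  also have "\<dots> = (\<integral>\<tau>. exp (- \<tau>) * fv_q1 \<theta>1 \<theta>2 (t - \<tau>) x * F (fv_p11 \<theta>1 \<theta>2 \<tau>) * indicator {0..t} \<tau> \<partial>lborel)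
      + (\<integral>\<tau>. exp (- \<tau>) * fv_q2 \<theta>1 \<theta>2 (t - \<tau>) x * F (fv_p21 \<theta>1 \<theta>2 \<tau>) * indicator {0..t} \<tau> \<partial>lborel)"
    using subY(2)[OF t x F B] subZ(2)[OF t x F B] by simp
  also have "\<dots> = (\<integral>\<tau>. indicator {0..t} \<tau> * (exp (- \<tau>) * (fv_q1 \<theta>1 \<theta>2 (t - \<tau>) x * F (fv_p11 \<theta>1 \<theta>2 \<tau>)
           + fv_q2 \<theta>1 \<theta>2 (t - \<tau>) x * F (fv_p21 \<theta>1 \<theta>2 \<tau>))) \<partial>lborel)"
  proof -
    have b1: "\<bar>exp (- \<tau>) * (fv_q1 \<theta>1 \<theta>2 (t - \<tau>) x * F (fv_p11 \<theta>1 \<theta>2 \<tau>))\<bar> \<le> B" if "\<tau> \<in> {0..t}" for \<tau>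
      using that q1_01[of "t - \<tau>" x] x p11_01[of \<tau>] B[of "fv_p11 \<theta>1 \<theta>2 \<tau>"] by (intro bound3) auto
    have b2: "\<bar>exp (- \<tau>) * (fv_q2 \<theta>1 \<theta>2 (t - \<tau>) x * F (fv_p21 \<theta>1 \<theta>2 \<tau>))\<bar> \<le> B" if "\<tau> \<in> {0..t}" for \<tau>
      using that q2_01[of "t - \<tau>" x] x p21_01[of \<tau>] B[of "fv_p21 \<theta>1 \<theta>2 \<tau>"] by (intro bound3) auto
    have i1: "integrable lborel (\<lambda>\<tau>. indicator {0..t} \<tau> * (exp (- \<tau>) * (fv_q1 \<theta>1 \<theta>2 (t - \<tau>) x * F (fv_p11 \<theta>1 \<theta>2 \<tau>))))"
      by (rule integrable_ind_bdd[where B=B]) (use t b1 in \<open>auto simp: q1_eq p11_eq aa_def\<close>)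
    have i2: "integrable lborel (\<lambda>\<tau>. indicator {0..t} \<tau> * (exp (- \<tau>) * (fv_q2 \<theta>1 \<theta>2 (t - \<tau>) x * F (fv_p21 \<theta>1 \<theta>2 \<tau>))))"
      by (rule integrable_ind_bdd[where B=B]) (use t b2 in \<open>auto simp: q2_eq p21_eq aa_def\<close>)
    show ?thesis using i1 i2 by (simp add: algebra_simps)
  qed
  also have "\<dots> = (LBINT \<tau>:{0<..<t}. exp (- \<tau>) * (fv_q1 \<theta>1 \<theta>2 (t - \<tau>) x * F (fv_p11 \<theta>1 \<theta>2 \<tau>)
           + fv_q2 \<theta>1 \<theta>2 (t - \<tau>) x * F (fv_p21 \<theta>1 \<theta>2 \<tau>)))"
    unfolding set_lebesgue_integral_def
  proof (rule integral_cong_AE)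
    show "AE \<tau> in lborel. indicator {0..t} \<tau> * (exp (- \<tau>) * (fv_q1 \<theta>1 \<theta>2 (t - \<tau>) x * F (fv_p11 \<theta>1 \<theta>2 \<tau>)
           + fv_q2 \<theta>1 \<theta>2 (t - \<tau>) x * F (fv_p21 \<theta>1 \<theta>2 \<tau>))) = indicator {0<..<t} \<tau> *\<^sub>R (exp (- \<tau>) * (fv_q1 \<theta>1 \<theta>2 (t - \<tau>) x * F (fv_p11 \<theta>1 \<theta>2 \<tau>)
           + fv_q2 \<theta>1 \<theta>2 (t - \<tau>) x * F (fv_p21 \<theta>1 \<theta>2 \<tau>)))"
      using AE_lborel_singleton[of 0] AE_lborel_singleton[of t]
      by eventually_elim (auto simp: indicator_def)
  qed (unfold q1_eq q2_eq p11_eq p21_eq aa_def, measurable)+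
  finally show "(LBINT \<tau>:{0<..<t}. exp (- \<tau>) * (fv_q1 \<theta>1 \<theta>2 (t - \<tau>) x * F (fv_p11 \<theta>1 \<theta>2 \<tau>)
           + fv_q2 \<theta>1 \<theta>2 (t - \<tau>) x * F (fv_p21 \<theta>1 \<theta>2 \<tau>)))
     = (\<integral>\<xi>. F \<xi> * fv_dens \<theta>1 \<theta>2 x t \<xi> \<partial>lborel)" by simp
qed

end

context fvl begin

lemma conj2:
  assumes x: "x \<in> {0..1}"
  shows "\<forall>t>0. \<forall>A\<in>sets borel.
            fv_mix \<theta>1 \<theta>2 x t A = exp (- t) * indicator A (fv_q1 \<theta>1 \<theta>2 t x)
                               + (LBINT \<xi>:A. fv_dens \<theta>1 \<theta>2 x t \<xi>)"
proof (intro allI impI ballI)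
  fix t :: real and A :: "real set" assume t: "t > 0" and A: "A \<in> sets borel"
  have "(LBINT \<tau>:{0<..<t}. exp (- \<tau>) * (fv_q1 \<theta>1 \<theta>2 (t - \<tau>) x * indicator A (fv_p11 \<theta>1 \<theta>2 \<tau>)
           + fv_q2 \<theta>1 \<theta>2 (t - \<tau>) x * indicator A (fv_p21 \<theta>1 \<theta>2 \<tau>)))
     = (\<integral>\<xi>. indicator A \<xi> * fv_dens \<theta>1 \<theta>2 x t \<xi> \<partial>lborel)"
    by (rule gen_dens(2)[where B=1]) (use t x A in auto)
  then show "fv_mix \<theta>1 \<theta>2 x t A = exp (- t) * indicator A (fv_q1 \<theta>1 \<theta>2 t x)
                               + (LBINT \<xi>:A. fv_dens \<theta>1 \<theta>2 x t \<xi>)"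
    unfolding fv_mix_def set_lebesgue_integral_def by simp
qed

abbreviation "fs \<equiv> fv_stat \<theta>1 \<theta>2"

lemma fs_meas[measurable]: "fs \<in> borel_measurable borel"
  unfolding fv_stat_def Let_def by measurable

lemma fs_nonneg: "fs \<xi> \<ge> 0"
  unfolding fv_stat_def Let_def using p_pos p_lt1 th_pos by auto

lemma fs_out: "\<xi> \<notin> {0..1} \<Longrightarrow> fs \<xi> = 0"
  unfolding fv_stat_def Let_def by auto

definition RR :: "real \<Rightarrow> real set" where
  "RR t = {\<xi>. fv_p11 \<theta>1 \<theta>2 t < \<xi> \<or> \<xi> < fv_p21 \<theta>1 \<theta>2 t}"

lemma RR_meas[measurable]: "RR t \<in> sets borel"
  unfolding RR_def by measurable

lemma dens_pp: "fv_dens \<theta>1 \<theta>2 pp t \<xi> = indicator (RR t) \<xi> * fs \<xi>"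
proof -
  have aa': "exp (- th * t / 2) = aa t" unfolding aa_def ..
  have yp: "pp + (1 - pp) * aa t > pp" using p_lt1 aa_pos[of t] by simp
  have zp: "pp * (1 - aa t) < pp" using p_pos aa_pos[of t] by simp
  have z: "fv_p21 \<theta>1 \<theta>2 t = pp * (1 - aa t)" by (simp add: p21_eq algebra_simps)
  show ?thesis
    unfolding fv_dens_def fv_stat_def Let_def aa' RR_def p11_eq z
    using yp zp by (auto simp: indicator_def)
qed

lemma RR_ev:
  assumes "fs \<xi> \<noteq> 0"
  shows "\<exists>N. \<forall>n\<ge>N. \<xi> \<in> RR (real n)"
proof -
  have lim: "(\<lambda>n. aa (real n)) \<longlonglongrightarrow> 0"
    by (rule filterlim_compose[OF aa_lim filterlim_real_sequentially])
  have ne: "\<xi> \<noteq> pp"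
  proof
    assume "\<xi> = pp"
    then have "fs \<xi> = 0" unfolding fv_stat_def Let_def by simp
    with assms show False by simp
  qed
  show ?thesis
  proof (cases "\<xi> > pp")
    case True
    have "eventually (\<lambda>n. aa (real n) < (\<xi> - pp) / (1 - pp)) sequentially"
      by (rule order_tendstoD(2)[OF lim]) (use True p_lt1 in simp)
    then obtain N where N: "\<And>n. n \<ge> N \<Longrightarrow> aa (real n) < (\<xi> - pp) / (1 - pp)"
      by (auto simp: eventually_sequentially)
    show ?thesis
    proof (intro exI allI impI)
      fix n assume "n \<ge> N"
      then have "(1 - pp) * aa (real n) < \<xi> - pp" using N[of n] p_lt1 by (simp add: field_simps)
      then show "\<xi> \<in> RR (real n)" unfolding RR_def p11_eq by simp
    qed
  next
    case False
    then have lt: "\<xi> < pp" using ne by simp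
    have "eventually (\<lambda>n. aa (real n) < 1 - \<xi> / pp) sequentially"
      by (rule order_tendstoD(2)[OF lim]) (use lt p_pos in simp)
    then obtain N where N: "\<And>n. n \<ge> N \<Longrightarrow> aa (real n) < 1 - \<xi> / pp"
      by (auto simp: eventually_sequentially)
    show ?thesis
    proof (intro exI allI impI)
      fix n assume "n \<ge> N"
      then have "\<xi> < pp - pp * aa (real n)" using N[of n] p_pos by (simp add: field_simps)
      then show "\<xi> \<in> RR (real n)" unfolding RR_def p21_eq by simp
    qed
  qed
qed

lemma RR_mono: "s \<le> t \<Longrightarrow> RR s \<subseteq> RR t"
proof -
  assume st: "s \<le> t"
  have "aa t \<le> aa s" unfolding aa_def using st th_pos by (simp add: mult_left_mono)
  then have "fv_p11 \<theta>1 \<theta>2 t \<le> fv_p11 \<theta>1 \<theta>2 s" "fv_p21 \<theta>1 \<theta>2 s \<le> fv_p21 \<theta>1 \<theta>2 t"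
    unfolding p11_eq p21_eq using p_lt1 p_pos by (auto intro: mult_left_mono)
  then show ?thesis unfolding RR_def by auto
qed

lemma int_MM_pp:
  assumes t: "t \<ge> 0" and F[measurable]: "F \<in> borel_measurable borel"
    and B: "\<And>v. v \<in> {0..1} \<Longrightarrow> \<bar>F v\<bar> \<le> B"
  shows "integral\<^sup>L (MM pp t) F = exp (- t) * F pp + (\<integral>\<xi>. F \<xi> * (indicator (RR t) \<xi> * fs \<xi>) \<partial>lborel)"
    "integrable lborel (\<lambda>\<xi>. F \<xi> * (indicator (RR t) \<xi> * fs \<xi>))"
proof -
  have x: "pp \<in> {0..1}" using p_pos p_lt1 by simp
  show "integral\<^sup>L (MM pp t) F = exp (- t) * F pp + (\<integral>\<xi>. F \<xi> * (indicator (RR t) \<xi> * fs \<xi>) \<partial>lborel)"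
  proof -
    have "integral\<^sup>L (MM pp t) F = exp (- t) * F (fv_q1 \<theta>1 \<theta>2 t pp)
     + (LBINT \<tau>:{0<..<t}. exp (- \<tau>) * (fv_q1 \<theta>1 \<theta>2 (t - \<tau>) pp * F (fv_p11 \<theta>1 \<theta>2 \<tau>)
           + fv_q2 \<theta>1 \<theta>2 (t - \<tau>) pp * F (fv_p21 \<theta>1 \<theta>2 \<tau>)))"
      by (rule int_MM[OF t x F B])
    also have "(LBINT \<tau>:{0<..<t}. exp (- \<tau>) * (fv_q1 \<theta>1 \<theta>2 (t - \<tau>) pp * F (fv_p11 \<theta>1 \<theta>2 \<tau>)
           + fv_q2 \<theta>1 \<theta>2 (t - \<tau>) pp * F (fv_p21 \<theta>1 \<theta>2 \<tau>)))
        = (\<integral>\<xi>. F \<xi> * fv_dens \<theta>1 \<theta>2 pp t \<xi> \<partial>lborel)"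
      by (rule gen_dens(2)[OF t x F B])
    finally show ?thesis by (simp add: q1_eq dens_pp)
  qed
  show "integrable lborel (\<lambda>\<xi>. F \<xi> * (indicator (RR t) \<xi> * fs \<xi>))"
    using gen_dens(1)[OF t x F B] unfolding dens_pp .
qed

lemma mass_RR: "t \<ge> 0 \<Longrightarrow> (\<integral>\<xi>. indicator (RR t) \<xi> * fs \<xi> \<partial>lborel) = 1 - exp (- t)"
proof -
  assume t: "t \<ge> 0"
  have x: "pp \<in> {0..1}" using p_pos p_lt1 by simp
  interpret prob_space "MM pp t" by (rule prob_MM[OF t x])
  have "integral\<^sup>L (MM pp t) (\<lambda>_. 1::real) = 1" using prob_space by (simp add: lebesgue_integral_const)
  then show ?thesis using int_MM_pp(1)[OF t, of "\<lambda>_. 1" 1] by simp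
qed

lemma fs_nn_integral: "(\<integral>\<^sup>+\<xi>. ennreal (fs \<xi>) \<partial>lborel) = 1"
proof -
  define f where "f n \<xi> = ennreal (indicator (RR (real n)) \<xi> * fs \<xi>)" for n \<xi>
  have inc: "incseq f"
    unfolding f_def incseq_def le_fun_def
  proof (intro allI impI)
    fix m n :: nat and \<xi> :: real assume "m \<le> n"
    then have "RR (real m) \<subseteq> RR (real n)" by (intro RR_mono) simp
    then show "ennreal (indicator (RR (real m)) \<xi> * fs \<xi>) \<le> ennreal (indicator (RR (real n)) \<xi> * fs \<xi>)"
      using fs_nonneg[of \<xi>] by (auto simp: indicator_def intro!: ennreal_leI)
  qed
  have sup: "(SUP n. f n \<xi>) = ennreal (fs \<xi>)" for \<xi>
  proof (cases "fs \<xi> = 0")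
    case True then show ?thesis unfolding f_def by simp
  next
    case False
    then obtain N where N: "\<And>n. n \<ge> N \<Longrightarrow> \<xi> \<in> RR (real n)" using RR_ev by blast
    show ?thesis
    proof (rule antisym)
      show "(SUP n. f n \<xi>) \<le> ennreal (fs \<xi>)"
        unfolding f_def using fs_nonneg by (intro SUP_least ennreal_leI) (auto simp: indicator_def)
      have "f N \<xi> = ennreal (fs \<xi>)" unfolding f_def using N[of N] by simp
      then show "ennreal (fs \<xi>) \<le> (SUP n. f n \<xi>)" by (metis SUP_upper UNIV_I)
    qed
  qed
  have "(\<integral>\<^sup>+\<xi>. ennreal (fs \<xi>) \<partial>lborel) = (\<integral>\<^sup>+\<xi>. (SUP n. f n \<xi>) \<partial>lborel)" by (simp add: sup)
  also have "\<dots> = (SUP n. integral\<^sup>N lborel (f n))"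
    by (rule nn_integral_monotone_convergence_SUP[OF inc]) (unfold f_def, measurable)
  also have "\<dots> = (SUP n. ennreal (1 - exp (- real n)))"
  proof (rule SUP_cong[OF refl])
    fix n :: nat
    have "integrable lborel (\<lambda>\<xi>. indicator (RR (real n)) \<xi> * fs \<xi>)"
      using int_MM_pp(2)[of "real n" "\<lambda>_. 1" 1] by simp
    then show "integral\<^sup>N lborel (f n) = ennreal (1 - exp (- real n))"
      unfolding f_def using fs_nonneg mass_RR[of "real n"]
      by (subst nn_integral_eq_integral) (auto simp: indicator_def)
  qed
  also have "\<dots> = 1"
  proof -
    have inc2: "incseq (\<lambda>n. ennreal (1 - exp (- real n)))"
      unfolding incseq_def by (auto intro!: ennreal_leI)
    have "(\<lambda>n. ennreal (1 - exp (- real n))) \<longlonglongrightarrow> (SUP n. ennreal (1 - exp (- real n)))"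
      by (rule LIMSEQ_SUP[OF inc2])
    moreover have "(\<lambda>n. ennreal (1 - exp (- real n))) \<longlonglongrightarrow> ennreal (1 - 0)"
    proof (intro tendsto_ennrealI tendsto_diff tendsto_const)
      have "LIM n sequentially. - real n :> at_bot"
        unfolding filterlim_uminus_at_bot by (simp add: filterlim_real_sequentially)
      then show "(\<lambda>n. exp (- real n)) \<longlonglongrightarrow> 0"
        by (rule filterlim_compose[OF exp_at_bot])
    qed
    ultimately show ?thesis using LIMSEQ_unique by fastforce
  qed
  finally show ?thesis .
qed

end

context fvl begin

lemma deriv_at_pos:
  fixes t :: real
  assumes "(f has_real_derivative D) (at t within {0..})" "t > 0"
  shows "(f has_real_derivative D) (at t)"
proof -
  have "(f has_real_derivative D) (at t within {0<..})"
    by (rule DERIV_subset[OF assms(1)]) auto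
  moreover have "at t within {0<..} = at t" by (rule at_within_open) (use assms(2) in auto)
  ultimately show ?thesis by simp
qed

lemma int_MM_pp_L:
  assumes t: "t > 0" and g: "\<And>y. (g has_real_derivative dg y) (at y)"
    and dgd: "\<And>y. (dg has_real_derivative d2g y) (at y)"
  shows "integral\<^sup>L (MM pp t) (fv_gen \<theta>1 \<theta>2 g dg)
     = - exp (- t) * g pp + exp (- t) * (pp * g (fv_p11 \<theta>1 \<theta>2 t) + (1 - pp) * g (fv_p21 \<theta>1 \<theta>2 t))"
proof -
  have x: "pp \<in> {0..1}" using p_pos p_lt1 by simp
  have cg: "continuous_on UNIV g"
    using g by (intro continuous_at_imp_continuous_on) (auto intro: DERIV_isCont)
  have cg': "continuous_on S (\<lambda>\<tau>. g (f \<tau>))" if "continuous_on S f" for f and S :: "real set"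
    by (rule continuous_on_compose2[OF cg that]) auto
  have D1: "((\<lambda>s. integral\<^sup>L (MM pp s) g) has_real_derivative integral\<^sup>L (MM pp t) (fv_gen \<theta>1 \<theta>2 g dg)) (at t)"
    by (rule deriv_at_pos[OF FE_MM[OF x g dgd] t]) (use t in simp)
  let ?fS = "\<lambda>\<tau>. exp (- \<tau>) * (pp * g (fv_p11 \<theta>1 \<theta>2 \<tau>) + (1 - pp) * g (fv_p21 \<theta>1 \<theta>2 \<tau>))"
  have dSS: "(SS g has_real_derivative ?fS t) (at t within {0..t+1})"
    unfolding SS_def has_real_derivative_iff_has_vector_derivative
    by (rule interval_integral_FTC2) (use t in \<open>auto intro!: continuous_intros cg' cont_p11 cont_p21\<close>)
  have hE': "((\<lambda>\<tau>. exp (- \<tau>)) has_real_derivative - exp (- t)) (at t within {0..t+1})"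
    by (rule derivative_eq_intros refl)+ simp
  have "((\<lambda>s. exp (- s) * g pp + SS g s) has_real_derivative - exp (- t) * g pp + ?fS t) (at t within {0..t+1})"
    by (intro DERIV_add DERIV_cmult_right[OF hE'] dSS) 
  then have "((\<lambda>s. exp (- s) * g pp + SS g s) has_real_derivative - exp (- t) * g pp + ?fS t) (at t within {0..})"
    by (rule deriv_Icc_Ici) (use t in simp)
  then have "((\<lambda>s. integral\<^sup>L (MM pp s) g) has_real_derivative - exp (- t) * g pp + ?fS t) (at t within {0..})"
  proof (rule has_field_derivative_transform_within[OF _ zero_less_one])
    show "t \<in> {0..}" using t by simp
    fix s :: real assume "s \<in> {0..}"
    then show "exp (- s) * g pp + SS g s = integral\<^sup>L (MM pp s) g"
      using int_MM_cont[OF _ x cg, of s] by (simp add: q1_eq)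
  qed
  then have D2: "((\<lambda>s. integral\<^sup>L (MM pp s) g) has_real_derivative - exp (- t) * g pp + ?fS t) (at t)"
    by (rule deriv_at_pos[OF _ t])
  show ?thesis using DERIV_unique[OF D1 D2] by simp
qed

end

context fvl begin

lemma fs_int: "integrable lborel fs"
  by (rule integrableI_nonneg) (use fs_nonneg fs_nn_integral in auto)

lemma exp_seq: "(\<lambda>n. exp (- real (Suc n))) \<longlonglongrightarrow> 0"
proof -
  have "LIM n sequentially. - real n :> at_bot"
    unfolding filterlim_uminus_at_bot by (simp add: filterlim_real_sequentially)
  then have "(\<lambda>n. exp (- real n)) \<longlonglongrightarrow> 0"
    by (rule filterlim_compose[OF exp_at_bot])
  then show ?thesis by (rule LIMSEQ_Suc)
qed

lemma stat_zero:
  assumes g: "\<And>y. (g has_real_derivative dg y) (at y)"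
    and dgd: "\<And>y. (dg has_real_derivative d2g y) (at y)"
  shows "integral\<^sup>L (density lborel (\<lambda>\<xi>. ennreal (fs \<xi>))) (fv_gen \<theta>1 \<theta>2 g dg) = 0"
proof -
  let ?L = "fv_gen \<theta>1 \<theta>2 g dg"
  have cg: "continuous_on UNIV g"
    using g by (intro continuous_at_imp_continuous_on) (auto intro: DERIV_isCont)
  have cdg: "continuous_on UNIV dg"
    using dgd by (intro continuous_at_imp_continuous_on) (auto intro: DERIV_isCont)
  have cg': "continuous_on S (\<lambda>\<tau>. g (f \<tau>))" if "continuous_on S f" for f and S :: "real set"
    by (rule continuous_on_compose2[OF cg that]) auto
  have cdg': "continuous_on S (\<lambda>\<tau>. dg (f \<tau>))" if "continuous_on S f" for f and S :: "real set"
    by (rule continuous_on_compose2[OF cdg that]) auto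
  have cL: "continuous_on UNIV ?L"
    unfolding fv_gen_def by (intro continuous_intros cg' cdg') auto
  have Lm[measurable]: "?L \<in> borel_measurable borel" using cL by (simp add: borel_measurable_continuous_onI)
  obtain BL where BL: "\<And>v. v \<in> {0..1} \<Longrightarrow> \<bar>?L v\<bar> \<le> BL" using cont_bdd01[OF cL] by blast
  obtain Bg where Bg: "\<And>v. v \<in> {0..1} \<Longrightarrow> \<bar>g v\<bar> \<le> Bg" using cont_bdd01[OF cg] by blast
  define s where "s n \<xi> = ?L \<xi> * (indicator (RR (real (Suc n))) \<xi> * fs \<xi>)" for n \<xi>
  have lim1: "(\<lambda>n. integral\<^sup>L lborel (s n)) \<longlonglongrightarrow> (\<integral>\<xi>. ?L \<xi> * fs \<xi> \<partial>lborel)"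
  proof (rule integral_dominated_convergence[where w="\<lambda>\<xi>. BL * fs \<xi>"])
    show "(\<lambda>\<xi>. ?L \<xi> * fs \<xi>) \<in> borel_measurable lborel" by measurable
    show "s n \<in> borel_measurable lborel" for n unfolding s_def by measurable
    show "integrable lborel (\<lambda>\<xi>. BL * fs \<xi>)" by (intro integrable_mult_right fs_int)
    show "AE \<xi> in lborel. (\<lambda>n. s n \<xi>) \<longlonglongrightarrow> ?L \<xi> * fs \<xi>"
    proof (rule AE_I2)
      fix \<xi> :: real
      show "(\<lambda>n. s n \<xi>) \<longlonglongrightarrow> ?L \<xi> * fs \<xi>"
      proof (cases "fs \<xi> = 0")
        case True then show ?thesis unfolding s_def by simp
      next
        case False
        then obtain N where N: "\<And>n. n \<ge> N \<Longrightarrow> \<xi> \<in> RR (real n)" using RR_ev by blast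
        have N': "indicator (RR (real (Suc n))) \<xi> = (1::real)" if "n \<ge> N" for n
          using N[of "Suc n"] that by simp
        have "eventually (\<lambda>n. s n \<xi> = ?L \<xi> * fs \<xi>) sequentially"
          unfolding eventually_sequentially s_def using N' by (intro exI[of _ N]) auto
        then show ?thesis by (rule tendsto_eventually)
      qed
    qed
    show "AE \<xi> in lborel. norm (s n \<xi>) \<le> BL * fs \<xi>" for n
    proof (rule AE_I2)
      fix \<xi> :: real
      show "norm (s n \<xi>) \<le> BL * fs \<xi>"
      proof (cases "fs \<xi> = 0")
        case True then show ?thesis unfolding s_def by simp
      next
        case False
        then have "\<xi> \<in> {0..1}" using fs_out by blast
        then have "\<bar>?L \<xi>\<bar> \<le> BL" by (rule BL)
        then have "\<bar>?L \<xi>\<bar> * (indicator (RR (real (Suc n))) \<xi> * fs \<xi>) \<le> BL * fs \<xi>"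
          using fs_nonneg[of \<xi>] by (auto simp: indicator_def intro: mult_right_mono)
        then show ?thesis unfolding s_def using fs_nonneg[of \<xi>] by (simp add: abs_mult)
      qed
    qed
  qed
  define e where "e n = exp (- real (Suc n))" for n
  have sn: "integral\<^sup>L lborel (s n) = e n * (- g pp + (pp * g (fv_p11 \<theta>1 \<theta>2 (real (Suc n))) + (1 - pp) * g (fv_p21 \<theta>1 \<theta>2 (real (Suc n)))) - ?L pp)" for n
  proof -
    have t: "real (Suc n) \<ge> 0" "real (Suc n) > 0" by auto
    have "integral\<^sup>L (MM pp (real (Suc n))) ?L = exp (- real (Suc n)) * ?L pp + integral\<^sup>L lborel (s n)"
      unfolding s_def by (rule int_MM_pp(1)[OF t(1) Lm BL])
    moreover have "integral\<^sup>L (MM pp (real (Suc n))) ?L = - exp (- real (Suc n)) * g pp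
        + exp (- real (Suc n)) * (pp * g (fv_p11 \<theta>1 \<theta>2 (real (Suc n))) + (1 - pp) * g (fv_p21 \<theta>1 \<theta>2 (real (Suc n))))"
      by (rule int_MM_pp_L[OF t(2) g dgd])
    ultimately show ?thesis unfolding e_def by (simp add: algebra_simps)
  qed
  have lim2: "(\<lambda>n. integral\<^sup>L lborel (s n)) \<longlonglongrightarrow> 0"
  proof (rule Lim_null_comparison)
    show "eventually (\<lambda>n. norm (integral\<^sup>L lborel (s n)) \<le> e n * (Bg + Bg + BL)) sequentially"
    proof (rule always_eventually, rule allI)
      fix n
      let ?y = "fv_p11 \<theta>1 \<theta>2 (real (Suc n))" and ?z = "fv_p21 \<theta>1 \<theta>2 (real (Suc n))"
      have pp01: "pp \<in> {0..1}" using p_pos p_lt1 by simp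
      have h1: "\<bar>g pp\<bar> \<le> Bg" by (rule Bg[OF pp01])
      have h2: "\<bar>g ?y\<bar> \<le> Bg" by (rule Bg[OF p11_01]) simp
      have h3: "\<bar>g ?z\<bar> \<le> Bg" by (rule Bg[OF p21_01]) simp
      have h4: "\<bar>?L pp\<bar> \<le> BL" by (rule BL[OF pp01])
      have a1: "\<bar>pp * g ?y\<bar> \<le> pp * Bg" using h2 p_pos by (simp add: abs_mult mult_left_mono)
      have a2: "\<bar>(1 - pp) * g ?z\<bar> \<le> (1 - pp) * Bg" using h3 p_lt1 by (simp add: abs_mult mult_left_mono)
      have "\<bar>pp * g ?y + (1 - pp) * g ?z\<bar> \<le> pp * Bg + (1 - pp) * Bg"
        by (rule order.trans[OF abs_triangle_ineq add_mono[OF a1 a2]])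
      then have a3: "\<bar>pp * g ?y + (1 - pp) * g ?z\<bar> \<le> Bg" by (simp add: algebra_simps)
      have "\<bar>- g pp + (pp * g ?y + (1 - pp) * g ?z) - ?L pp\<bar> \<le> Bg + Bg + BL"
        using h1 h4 a3 unfolding abs_le_iff by linarith
      moreover have "e n > 0" unfolding e_def by simp
      ultimately show "norm (integral\<^sup>L lborel (s n)) \<le> e n * (Bg + Bg + BL)"
        unfolding sn by (simp add: abs_mult mult_left_mono)
    qed
    show "(\<lambda>n. e n * (Bg + Bg + BL)) \<longlonglongrightarrow> 0"
      unfolding e_def by (rule tendsto_mult_left_zero[OF exp_seq])
  qed
  have "(\<integral>\<xi>. ?L \<xi> * fs \<xi> \<partial>lborel) = 0" using LIMSEQ_unique[OF lim1 lim2] .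
  moreover have "integral\<^sup>L (density lborel (\<lambda>\<xi>. ennreal (fs \<xi>))) ?L = (\<integral>\<xi>. ?L \<xi> * fs \<xi> \<partial>lborel)"
    using fs_nonneg by (subst integral_density) (auto simp: mult.commute)
  ultimately show ?thesis by simp
qed

lemma conj4: "fv_evolution \<theta>1 \<theta>2 (\<lambda>t. density lborel (\<lambda>\<xi>. ennreal (fs \<xi>)))"
proof -
  let ?\<pi> = "density lborel (\<lambda>\<xi>. ennreal (fs \<xi>))"
  have e1: "emeasure ?\<pi> UNIV = 1"
    using fs_nn_integral by (subst emeasure_density) auto
  have e2: "emeasure ?\<pi> {0..1} = 1"
  proof -
    have "emeasure ?\<pi> {0..1} = (\<integral>\<^sup>+\<xi>. ennreal (fs \<xi>) * indicator {0..1} \<xi> \<partial>lborel)"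
      by (subst emeasure_density) auto
    also have "\<dots> = (\<integral>\<^sup>+\<xi>. ennreal (fs \<xi>) \<partial>lborel)"
      by (rule nn_integral_cong) (auto simp: indicator_def fs_out)
    finally show ?thesis using fs_nn_integral by simp
  qed
  have ps: "prob_space ?\<pi>" by (rule prob_spaceI) (simp add: e1)
  have A1: "\<forall>t\<ge>0. sets ?\<pi> = sets borel \<and> prob_space ?\<pi> \<and> emeasure ?\<pi> {0..1} = 1" using ps e2 by simp
  have A2: "\<forall>g dg d2g. (\<forall>y. (g has_real_derivative dg y) (at y)) \<and>
                 (\<forall>y. (dg has_real_derivative d2g y) (at y)) \<and> continuous_on UNIV d2g \<longrightarrow>
        (\<forall>t\<ge>0. ((\<lambda>s. \<integral>y. g y \<partial>?\<pi>) has_real_derivative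
                    (\<integral>y. fv_gen \<theta>1 \<theta>2 g dg y \<partial>?\<pi>)) (at t within {0..}))"
  proof (intro allI impI)
    fix g dg d2g :: "real \<Rightarrow> real" and t :: real
    assume h: "(\<forall>y. (g has_real_derivative dg y) (at y)) \<and> (\<forall>y. (dg has_real_derivative d2g y) (at y)) \<and> continuous_on UNIV d2g"
    have "integral\<^sup>L ?\<pi> (fv_gen \<theta>1 \<theta>2 g dg) = 0" using h by (intro stat_zero) auto
    then show "((\<lambda>s. \<integral>y. g y \<partial>?\<pi>) has_real_derivative (\<integral>y. fv_gen \<theta>1 \<theta>2 g dg y \<partial>?\<pi>)) (at t within {0..})"
      by (simp add: DERIV_const)
  qed
  show ?thesis unfolding fv_evolution_def using A1 A2 by blast
qed

end


theorem theorem1: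
  fixes \<theta>1 \<theta>2 x :: real and P :: "real \<Rightarrow> real measure"
  assumes "\<theta>1 > 0" and "\<theta>2 > 0" and "x \<in> {0..1}"
    and "\<forall>t\<ge>0. sets (P t) = sets borel"
  shows "(fv_law \<theta>1 \<theta>2 x P \<longleftrightarrow>
            (\<forall>t\<ge>0. \<forall>A\<in>sets borel. emeasure (P t) A = ennreal (fv_mix \<theta>1 \<theta>2 x t A)))
       \<and> (\<forall>t>0. \<forall>A\<in>sets borel.
            fv_mix \<theta>1 \<theta>2 x t A = exp (- t) * indicator A (fv_q1 \<theta>1 \<theta>2 t x)
                               + (LBINT \<xi>:A. fv_dens \<theta>1 \<theta>2 x t \<xi>))
       \<and> (\<forall>\<xi>\<in>{0<..<1} - {fv_p \<theta>1 \<theta>2}.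
            ((\<lambda>t. fv_dens \<theta>1 \<theta>2 x t \<xi>) \<longlongrightarrow> fv_stat \<theta>1 \<theta>2 \<xi>) at_top)
       \<and> fv_evolution \<theta>1 \<theta>2 (\<lambda>t. density lborel (\<lambda>\<xi>. ennreal (fv_stat \<theta>1 \<theta>2 \<xi>)))"
proof -
  interpret fvl \<theta>1 \<theta>2 using assms(1,2) by unfold_locales
  show ?thesis using conj1[OF assms(3) assms(4)] conj2[OF assms(3)] conj3[of x] conj4 by simp
qed

end
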